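(* Let $0<a<4$ and let $p$ be an integer with $p\ge 2(12-a)/(4-a)$. Then the estimator $$\hat\theta_{a,p-2}(X)=\Bigl(1-\frac{p-2}{\|X\|^2+a}\Bigr)X$$ dominates the James--Stein estimator $\hat\theta_{\mathrm{JS}}(X)=(1-(p-2)/\|X\|^2)X$, i.e. $R(\theta,\hat\theta_{a,p-2})\le R(\theta,\hat\theta_{\mathrm{JS}})$ for all $\theta\in\mathbb{R}^p$. Moreover, with $\Phi(w)=w/\{a(p-2)\}$ one has, for $p\ge 7$, $$I\Bigl(\Phi,\tfrac{1}{p-2};p\Bigr)\ge\frac{p-6}{a(p-2)}.$$
   Context: $X\sim\mathcal{N}_p(\theta,I_p)$, risk $R(\theta,\hat\theta)=\mathrm{E}_\theta[\|\hat\theta(X)-\theta\|^2]$. For $\Phi$ positive non-decreasing, $C>0$ and $p\ge3$, $$I(\Phi,C;p)=\frac{\displaystyle\int_0^\infty \Phi(w)\,\frac{w^{p/2-1}e^{-w/2}}{w\{\int_0^w t^{-1}\Phi(t)\,\mathrm{d}t+C\}^2}\,\mathrm{d}w}{\displaystyle\int_0^\infty \frac{w^{p/2-1}e^{-w/2}}{w\{\int_0^w t^{-1}\Phi(t)\,\mathrm{d}t+C\}^2}\,\mathrm{d}w}.$$ *)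

theory Defs
  imports "HOL-Analysis.Analysis"
begin

definition gauss_density :: "real^'n \<Rightarrow> real^'n \<Rightarrow> real" where
  "gauss_density \<theta> x =
     (2 * pi) powr (- real CARD('n) / 2) * exp (- (norm (x - \<theta>))\<^sup>2 / 2)"

definition gauss_vec :: "real^'n \<Rightarrow> (real^'n) measure" where
  "gauss_vec \<theta> = density lborel (\<lambda>x. ennreal (gauss_density \<theta> x))"

text \<open>Quadratic risk R(theta, est) = E_theta ||est(X) - theta||^2 (as an extended
  nonnegative real, so that it is always defined).\<close>
definition risk :: "real^'n \<Rightarrow> (real^'n \<Rightarrow> real^'n) \<Rightarrow> ennreal" where
  "risk \<theta> est = (\<integral>\<^sup>+ x. ennreal ((norm (est x - \<theta>))\<^sup>2) \<partial>gauss_vec \<theta>)"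

definition JS_est :: "real^'n \<Rightarrow> real^'n" where
  "JS_est x = (1 - (real CARD('n) - 2) / (norm x)\<^sup>2) *\<^sub>R x"

definition shrink_est :: "real \<Rightarrow> real \<Rightarrow> real^'n \<Rightarrow> real^'n" where
  "shrink_est a c x = (1 - c / ((norm x)\<^sup>2 + a)) *\<^sub>R x"

definition I_weight :: "(real \<Rightarrow> real) \<Rightarrow> real \<Rightarrow> nat \<Rightarrow> real \<Rightarrow> real" where
  "I_weight \<Phi> C p w =
     w powr (real p / 2 - 1) * exp (- w / 2) /
     (w * ((LBINT t=0..w. \<Phi> t / t) + C)\<^sup>2)"

definition I_fun :: "(real \<Rightarrow> real) \<Rightarrow> real \<Rightarrow> nat \<Rightarrow> real" where
  "I_fun \<Phi> C p =
     (\<integral>w\<in>{0<..}. \<Phi> w * I_weight \<Phi> C p w \<partial>lborel) /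
     (\<integral>w\<in>{0<..}. I_weight \<Phi> C p w \<partial>lborel)"

end

theory Submission
  imports Defs "HOL-Probability.Distributions"
begin

lemma norm_sq_basis: "(norm (x::'a::euclidean_space))\<^sup>2 = (\<Sum>b\<in>Basis. (x \<bullet> b)\<^sup>2)"
  unfolding power2_norm_eq_inner by (subst euclidean_inner) (simp add: power2_eq_square)

lemma gauss_integrable:
  assumes "0 < \<sigma>"
  shows "integrable lborel (\<lambda>x::'a::euclidean_space. exp (- (norm x)\<^sup>2 / (2*\<sigma>\<^sup>2)))"
proof -
  define K where "K = sqrt (2*pi*\<sigma>\<^sup>2) ^ DIM('a)"
  have Kpos: "K > 0" using assms by (simp add: K_def)
  have eq: "exp (- (norm x)\<^sup>2 / (2*\<sigma>\<^sup>2)) = K * (\<Prod>b\<in>Basis. normal_density 0 \<sigma> (x \<bullet> b))" for x :: 'a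
  proof -
    have "(\<Prod>b\<in>Basis. normal_density 0 \<sigma> (x \<bullet> b)) = (\<Prod>b\<in>(Basis::'a set). 1 / sqrt (2*pi*\<sigma>\<^sup>2) * exp (- (x \<bullet> b)\<^sup>2 / (2*\<sigma>\<^sup>2)))"
      by (simp add: normal_density_def)
    also have "\<dots> = (\<Prod>b\<in>(Basis::'a set). 1 / sqrt (2*pi*\<sigma>\<^sup>2)) * (\<Prod>b\<in>(Basis::'a set). exp (- (x \<bullet> b)\<^sup>2 / (2*\<sigma>\<^sup>2)))"
      by (rule prod.distrib)
    also have "\<dots> = (1 / sqrt (2*pi*\<sigma>\<^sup>2)) ^ DIM('a) * exp (\<Sum>b\<in>Basis. - (x \<bullet> b)\<^sup>2 / (2*\<sigma>\<^sup>2))"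
      by (simp only: prod_constant exp_sum[OF finite_Basis])
    also have "(\<Sum>b\<in>(Basis::'a set). - (x \<bullet> b)\<^sup>2 / (2*\<sigma>\<^sup>2)) = - (norm x)\<^sup>2 / (2*\<sigma>\<^sup>2)"
      by (simp add: norm_sq_basis sum_divide_distrib[symmetric] sum_negf)
    finally show ?thesis using Kpos assms unfolding K_def by (simp add: field_simps power_divide)
  qed
  have "(\<integral>\<^sup>+x. ennreal (exp (- (norm x)\<^sup>2 / (2*\<sigma>\<^sup>2))) \<partial>(lborel::'a measure))
      = (\<integral>\<^sup>+x. ennreal K * (\<Prod>b\<in>Basis. ennreal (normal_density 0 \<sigma> (x \<bullet> b))) \<partial>(lborel::'a measure))"
  proof (rule nn_integral_cong)
    fix x :: 'a
    show "ennreal (exp (- (norm x)\<^sup>2 / (2*\<sigma>\<^sup>2))) = ennreal K * (\<Prod>b\<in>Basis. ennreal (normal_density 0 \<sigma> (x \<bullet> b)))"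
      unfolding eq using Kpos by (simp add: ennreal_mult prod_nonneg prod_ennreal)
  qed
  also have "\<dots> = ennreal K * (\<integral>\<^sup>+x. (\<Prod>b\<in>Basis. ennreal (normal_density 0 \<sigma> (x \<bullet> b))) \<partial>(lborel::'a measure))"
    by (rule nn_integral_cmult) measurable
  also have "(\<integral>\<^sup>+x. (\<Prod>b\<in>(Basis::'a set). ennreal (normal_density 0 \<sigma> (x \<bullet> b))) \<partial>lborel)
      = (\<Prod>b\<in>(Basis::'a set). \<integral>\<^sup>+y. ennreal (normal_density 0 \<sigma> y) \<partial>lborel)"
    by (rule nn_integral_lborel_prod) auto
  also have "\<dots> = 1"
  proof -
    have "(\<integral>\<^sup>+y. ennreal (normal_density 0 \<sigma> y) \<partial>lborel) = 1"
      using assms by (subst nn_integral_eq_integral) auto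
    then show ?thesis by simp
  qed
  finally have fin: "(\<integral>\<^sup>+x. ennreal (exp (- (norm x)\<^sup>2 / (2*\<sigma>\<^sup>2))) \<partial>(lborel::'a measure)) = ennreal K" by simp
  show ?thesis
  proof (rule integrableI_nonneg)
    show "(\<integral>\<^sup>+x. ennreal (exp (- (norm x)\<^sup>2 / (2*\<sigma>\<^sup>2))) \<partial>(lborel::'a measure)) < \<infinity>"
      unfolding fin by simp
  qed auto
qed

lemma nn_integral_scale:
  fixes f :: "'a::euclidean_space \<Rightarrow> ennreal" and c :: real
  assumes [measurable]: "f \<in> borel_measurable borel" and c: "c \<noteq> 0"
  shows "(\<integral>\<^sup>+x. f x \<partial>lborel) = ennreal (\<bar>c\<bar>^DIM('a)) * (\<integral>\<^sup>+x. f (c *\<^sub>R x) \<partial>lborel)"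
  by (subst lborel_affine[OF c, of 0])
     (simp add: nn_integral_density nn_integral_distr nn_integral_cmult)

lemma integrable_scale:
  fixes f :: "'a::euclidean_space \<Rightarrow> real" and c :: real
  assumes f: "integrable lborel f" and c: "c \<noteq> 0"
  shows "integrable lborel (\<lambda>x. f (c *\<^sub>R x))"
proof -
  have [measurable]: "f \<in> borel_measurable borel" using f by auto
  have "(\<integral>\<^sup>+x. ennreal (norm (f x)) \<partial>lborel) < \<infinity>" using f by (simp add: integrable_iff_bounded)
  then have "ennreal (\<bar>c\<bar>^DIM('a)) * (\<integral>\<^sup>+x. ennreal (norm (f (c *\<^sub>R x))) \<partial>lborel) < \<infinity>"
    using nn_integral_scale[of "\<lambda>x. ennreal (norm (f x))" c] c by simp
  then have "(\<integral>\<^sup>+x. ennreal (norm (f (c *\<^sub>R x))) \<partial>lborel) < \<infinity>"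
    using c by (auto simp: ennreal_mult_less_top)
  then show ?thesis by (simp add: integrable_iff_bounded)
qed

lemma integral_scale:
  fixes f :: "'a::euclidean_space \<Rightarrow> real" and c :: real
  assumes f: "integrable lborel f" and c: "c \<noteq> 0"
  shows "integral\<^sup>L lborel f = \<bar>c\<bar>^DIM('a) * integral\<^sup>L lborel (\<lambda>x. f (c *\<^sub>R x))"
proof -
  have [measurable]: "f \<in> borel_measurable borel" using f by auto
  have fi: "integrable lborel (\<lambda>x. f (c *\<^sub>R x))" using integrable_scale[OF f c] .
  show ?thesis
    using c f fi
    by (subst lborel_affine[OF c, of 0])
       (simp add: integral_density integral_distr)
qed

lemma deriv_seq:
  assumes "(F has_real_derivative D) (at t)"
  shows "(\<lambda>n. (F (t + inverse (real (Suc n))) - F t) / inverse (real (Suc n))) \<longlonglongrightarrow> D"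
proof -
  have "((\<lambda>h. (F (t + h) - F t) / h) \<longlongrightarrow> D) (at 0)"
    using assms by (simp add: DERIV_def)
  moreover have "(\<lambda>n. inverse (real (Suc n))) \<longlonglongrightarrow> 0"
    by (rule LIMSEQ_inverse_real_of_nat)
  moreover have "\<forall>n. inverse (real (Suc n)) \<in> UNIV - {0}" by simp
  ultimately show ?thesis
    unfolding tendsto_at_iff_sequentially by (auto simp: o_def)
qed

lemma euler_identity:
  fixes f :: "'a::euclidean_space \<Rightarrow> real" and g :: "real \<Rightarrow> 'a \<Rightarrow> real" and B :: "'a \<Rightarrow> real"
  assumes fm[measurable]: "f \<in> borel_measurable borel" and gm[measurable]: "g 1 \<in> borel_measurable borel"
  and fi: "integrable lborel f" and Bi: "integrable lborel B"
  and der: "\<And>x t. 1 \<le> t \<Longrightarrow> t \<le> 2 \<Longrightarrow> ((\<lambda>s. f (s *\<^sub>R x)) has_real_derivative g t x) (at t)"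
  and bd: "\<And>x t. 1 \<le> t \<Longrightarrow> t \<le> 2 \<Longrightarrow> \<bar>g t x\<bar> \<le> B x"
  shows "integral\<^sup>L lborel (g 1) = - real DIM('a) * integral\<^sup>L lborel f"
proof -
  define h where "h n = inverse (real (Suc n))" for n
  define s where "s n = 1 + h n" for n
  have h_pos: "0 < h n" "h n \<le> 1" for n by (auto simp: h_def field_simps)
  have s_pos: "0 < s n" "1 < s n" "s n \<le> 2" for n using h_pos[of n] by (auto simp: s_def)
  define D where "D n x = (f (s n *\<^sub>R x) - f x) / h n" for n x
  have Dm[measurable]: "D n \<in> borel_measurable borel" for n
    unfolding D_def[abs_def] by measurable
  have DB: "\<bar>D n x\<bar> \<le> B x" for n x
  proof -
    have "\<exists>z>1. z < s n \<and> f (s n *\<^sub>R x) - f (1 *\<^sub>R x) = (s n - 1) * g z x"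
      by (rule MVT2) (use s_pos[of n] der in auto)
    then obtain z where z: "1 < z" "z < s n" "f (s n *\<^sub>R x) - f x = h n * g z x"
      by (auto simp: s_def)
    then have "D n x = g z x" using h_pos[of n] by (simp add: D_def)
    then show ?thesis using bd[of z x] z s_pos[of n] by simp
  qed
  have Dlim: "(\<lambda>n. D n x) \<longlonglongrightarrow> g 1 x" for x
  proof -
    have "((\<lambda>t. f (t *\<^sub>R x)) has_real_derivative g 1 x) (at 1)" using der by simp
    from deriv_seq[OF this] show ?thesis
      by (simp add: D_def s_def h_def)
  qed
  have lim1: "(\<lambda>n. integral\<^sup>L lborel (D n)) \<longlonglongrightarrow> integral\<^sup>L lborel (g 1)"
    by (rule integral_dominated_convergence[where w=B]) (use Bi DB Dlim in auto)
  have fsi: "integrable lborel (\<lambda>x. f (s n *\<^sub>R x))" for n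
    using integrable_scale[OF fi, of "s n"] s_pos[of n] by simp
  have intD: "integral\<^sup>L lborel (D n) = ((inverse (s n ^ DIM('a)) - 1) / h n) * integral\<^sup>L lborel f" for n
  proof -
    have "integral\<^sup>L lborel f = s n ^ DIM('a) * integral\<^sup>L lborel (\<lambda>x. f (s n *\<^sub>R x))"
      using integral_scale[OF fi, of "s n"] s_pos[of n] by simp
    then have e: "integral\<^sup>L lborel (\<lambda>x. f (s n *\<^sub>R x)) = inverse (s n ^ DIM('a)) * integral\<^sup>L lborel f"
      using s_pos[of n] by (simp add: field_simps)
    have "integral\<^sup>L lborel (D n) = (integral\<^sup>L lborel (\<lambda>x. f (s n *\<^sub>R x)) - integral\<^sup>L lborel f) / h n"
      unfolding D_def using fsi[of n] fi by simp
    also have "\<dots> = ((inverse (s n ^ DIM('a)) - 1) / h n) * integral\<^sup>L lborel f"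
      unfolding e by (simp add: field_simps)
    finally show ?thesis .
  qed
  have "((\<lambda>t. inverse (t ^ DIM('a))) has_real_derivative - real DIM('a)) (at 1)"
    by (auto intro!: derivative_eq_intros)
  from deriv_seq[OF this]
  have "(\<lambda>n. (inverse (s n ^ DIM('a)) - 1) / h n) \<longlonglongrightarrow> - real DIM('a)"
    by (simp add: s_def h_def)
  then have lim2: "(\<lambda>n. integral\<^sup>L lborel (D n)) \<longlonglongrightarrow> - real DIM('a) * integral\<^sup>L lborel f"
    unfolding intD by (intro tendsto_mult) auto
  show ?thesis using LIMSEQ_unique[OF lim1 lim2] .
qed

lemma ineq1: "0 < w \<Longrightarrow> 0 < (a::real) \<Longrightarrow> 1/(w+a) \<le> 1/w"
  by (simp add: frac_le)
lemma ineq2: "0 < w \<Longrightarrow> 0 < (a::real) \<Longrightarrow> 1/(w+a)^2 \<le> 1/(a*w)"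
proof -
  assume h: "0 < w" "0 < a"
  have "a*w \<le> (w+a)^2" using h by (simp add: power2_eq_square algebra_simps)
  then show ?thesis using h by (intro frac_le) auto
qed
lemma ineq3: "0 < w \<Longrightarrow> 0 < (a::real) \<Longrightarrow> 1/(w+a)^3 \<le> 1/(a^2*w)"
proof -
  assume h: "0 < w" "0 < a"
  have "a^2*w \<le> (w+a)^3" using h by (simp add: power3_eq_cube power2_eq_square algebra_simps)
  then show ?thesis using h by (intro frac_le) auto
qed
lemma ineq4: "0 < w \<Longrightarrow> 0 < (a::real) \<Longrightarrow> w/(w+a)^2 \<le> 1/w"
proof -
  assume h: "0 < w" "0 < a"
  have "w*w \<le> (w+a)^2" using h by (simp add: power2_eq_square algebra_simps)
  then show ?thesis using h by (simp add: divide_simps)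
qed
lemma ineq5: "0 < w \<Longrightarrow> 0 < (a::real) \<Longrightarrow> w/(w+a)^3 \<le> 1/(a*w)"
proof -
  assume h: "0 < w" "0 < a"
  have "w*(a*w) \<le> (w+a)^3" using h by (simp add: power3_eq_cube algebra_simps)
  then show ?thesis using h by (simp add: divide_simps)
qed
lemma ineq6: "0 < w \<Longrightarrow> 0 < (a::real) \<Longrightarrow> w/(w+a)^4 \<le> 1/(a^2*w)"
proof -
  assume h: "0 < w" "0 < a"
  have "a*w \<le> (w+a)^2" using h by (simp add: power2_eq_square algebra_simps)
  then have "(a*w)^2 \<le> ((w+a)^2)^2" using h by (intro power_mono) auto
  moreover have "w*(a^2*w) = (a*w)^2" by (simp add: power2_eq_square)
  moreover have "((w+a)^2)^2 = (w+a)^4" by (simp flip: power_mult)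
  ultimately have "w*(a^2*w) \<le> (w+a)^4" by simp
  then show ?thesis using h by (simp add: divide_simps)
qed

definition Qf :: "real \<Rightarrow> real \<Rightarrow> real \<Rightarrow> real \<Rightarrow> real \<Rightarrow> real \<Rightarrow> real" where
  "Qf \<alpha> \<beta> \<gamma> \<delta> a w = \<alpha>/w + \<beta>/(w+a) + \<gamma>/(w+a)^2 + \<delta>/(w+a)^3"
definition Qd :: "real \<Rightarrow> real \<Rightarrow> real \<Rightarrow> real \<Rightarrow> real \<Rightarrow> real \<Rightarrow> real" where
  "Qd \<alpha> \<beta> \<gamma> \<delta> a w = - \<alpha>/w^2 - \<beta>/(w+a)^2 - 2*\<gamma>/(w+a)^3 - 3*\<delta>/(w+a)^4"
definition QM :: "real \<Rightarrow> real \<Rightarrow> real \<Rightarrow> real \<Rightarrow> real \<Rightarrow> real" where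
  "QM \<alpha> \<beta> \<gamma> \<delta> a = \<bar>\<alpha>\<bar> + \<bar>\<beta>\<bar> + 2*\<bar>\<gamma>\<bar>/a + 3*\<bar>\<delta>\<bar>/a^2"

lemma d1_aux: "w + a \<noteq> 0 \<Longrightarrow> ((\<lambda>w. \<beta>/(w+a)) has_real_derivative (- \<beta>/(w+a)^2)) (at (w::real))"
  apply (rule derivative_eq_intros refl | simp)+
  apply (simp add: field_simps)
  apply (simp add: eval_nat_numeral algebra_simps power2_eq_square)?
  done
lemma d2_aux: "w + a \<noteq> 0 \<Longrightarrow> ((\<lambda>w. \<gamma>/(w+a)^2) has_real_derivative (- 2*\<gamma>/(w+a)^3)) (at (w::real))"
  apply (rule derivative_eq_intros refl | simp)+
  apply (simp add: field_simps)
  apply (simp add: eval_nat_numeral algebra_simps power2_eq_square)?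
  done
lemma d3_aux: "w + a \<noteq> 0 \<Longrightarrow> ((\<lambda>w. \<gamma>/(w+a)^3) has_real_derivative (- 3*\<gamma>/(w+a)^4)) (at (w::real))"
  apply (rule derivative_eq_intros refl | simp)+
  apply (simp add: field_simps)
  apply (simp add: eval_nat_numeral algebra_simps power2_eq_square)?
  done
lemma d0_aux: "w \<noteq> 0 \<Longrightarrow> ((\<lambda>w. \<alpha>/w) has_real_derivative (- \<alpha>/w^2)) (at (w::real))"
  apply (rule derivative_eq_intros refl | simp)+
  apply (simp add: field_simps power2_eq_square)
  done

lemma Q_deriv:
  assumes "0 < w" "0 < a"
  shows "(Qf \<alpha> \<beta> \<gamma> \<delta> a has_real_derivative Qd \<alpha> \<beta> \<gamma> \<delta> a w) (at w)"
proof -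
  have n: "w + a \<noteq> 0" "w \<noteq> 0" using assms by auto
  have "((\<lambda>w. \<alpha>/w + \<beta>/(w+a) + \<gamma>/(w+a)^2 + \<delta>/(w+a)^3) has_real_derivative
     (- \<alpha>/w^2) + (- \<beta>/(w+a)^2) + (- 2*\<gamma>/(w+a)^3) + (- 3*\<delta>/(w+a)^4)) (at w)"
    by (intro DERIV_add d0_aux d1_aux d2_aux d3_aux n)
  moreover have "Qf \<alpha> \<beta> \<gamma> \<delta> a = (\<lambda>w. \<alpha>/w + \<beta>/(w+a) + \<gamma>/(w+a)^2 + \<delta>/(w+a)^3)"
    by (simp add: Qf_def[abs_def])
  moreover have "Qd \<alpha> \<beta> \<gamma> \<delta> a w = (- \<alpha>/w^2) + (- \<beta>/(w+a)^2) + (- 2*\<gamma>/(w+a)^3) + (- 3*\<delta>/(w+a)^4)"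
    by (simp add: Qd_def)
  ultimately show ?thesis by simp
qed

lemma abs4: "\<bar>(a::real)+b+c+d\<bar> \<le> \<bar>a\<bar>+\<bar>b\<bar>+\<bar>c\<bar>+\<bar>d\<bar>" by arith

lemma QM_nonneg: "0 < a \<Longrightarrow> 0 \<le> QM \<alpha> \<beta> \<gamma> \<delta> a"
  by (simp add: QM_def)

lemma div_le_aux: "0 \<le> (c::real) \<Longrightarrow> 0 < y \<Longrightarrow> y \<le> x \<Longrightarrow> c / x \<le> c / y"
  by (rule divide_left_mono) auto

lemma Q_bound:
  assumes w: "0 < w" and a: "0 < a"
  shows "\<bar>Qf \<alpha> \<beta> \<gamma> \<delta> a w\<bar> \<le> QM \<alpha> \<beta> \<gamma> \<delta> a / w"
proof -
  have wa: "0 < w + a" using w a by simp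
  have t1: "\<bar>\<alpha>/w\<bar> \<le> \<bar>\<alpha>\<bar>/w" using w by (simp add: abs_divide)
  have t2: "\<bar>\<beta>/(w+a)\<bar> \<le> \<bar>\<beta>\<bar>/w"
  proof -
    have "\<bar>\<beta>/(w+a)\<bar> = \<bar>\<beta>\<bar>/(w+a)" using wa by (simp add: abs_divide)
    also have "\<dots> \<le> \<bar>\<beta>\<bar>/w" by (rule div_le_aux) (use w a in auto)
    finally show ?thesis .
  qed
  have t3: "\<bar>\<gamma>/(w+a)^2\<bar> \<le> (2*\<bar>\<gamma>\<bar>/a)/w"
  proof -
    have "\<bar>\<gamma>/(w+a)^2\<bar> = \<bar>\<gamma>\<bar>/(w+a)^2" using wa by (simp add: abs_divide)
    also have "\<dots> \<le> \<bar>\<gamma>\<bar>/(a*w)" 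
    proof (rule div_le_aux)
      show "a*w \<le> (w+a)^2" using w a by (simp add: power2_eq_square algebra_simps)
    qed (use w a in auto)
    also have "\<dots> = (\<bar>\<gamma>\<bar>/a)/w" by (simp add: divide_divide_eq_left)
    also have "\<dots> \<le> (2*\<bar>\<gamma>\<bar>/a)/w" by (intro divide_right_mono) (use w a in auto)
    finally show ?thesis .
  qed
  have t4: "\<bar>\<delta>/(w+a)^3\<bar> \<le> (3*\<bar>\<delta>\<bar>/a^2)/w"
  proof -
    have "\<bar>\<delta>/(w+a)^3\<bar> = \<bar>\<delta>\<bar>/(w+a)^3" using wa by (simp add: abs_divide)
    also have "\<dots> \<le> \<bar>\<delta>\<bar>/(a^2*w)" 
    proof (rule div_le_aux)
      show "a^2*w \<le> (w+a)^3" using ineq3[OF w a] w a by (simp add: divide_simps)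
    qed (use w a in auto)
    also have "\<dots> = (\<bar>\<delta>\<bar>/a^2)/w" by (simp add: divide_divide_eq_left)
    also have "\<dots> \<le> (3*\<bar>\<delta>\<bar>/a^2)/w" by (intro divide_right_mono) (use w a in auto)
    finally show ?thesis .
  qed
  have "\<bar>Qf \<alpha> \<beta> \<gamma> \<delta> a w\<bar> \<le> \<bar>\<alpha>/w\<bar> + \<bar>\<beta>/(w+a)\<bar> + \<bar>\<gamma>/(w+a)^2\<bar> + \<bar>\<delta>/(w+a)^3\<bar>"
    unfolding Qf_def by (rule abs4)
  also have "\<dots> \<le> \<bar>\<alpha>\<bar>/w + \<bar>\<beta>\<bar>/w + (2*\<bar>\<gamma>\<bar>/a)/w + (3*\<bar>\<delta>\<bar>/a^2)/w"
    using t1 t2 t3 t4 by linarith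
  also have "\<dots> = QM \<alpha> \<beta> \<gamma> \<delta> a / w" unfolding QM_def by (simp only: add_divide_distrib)
  finally show ?thesis .
qed

lemma Qd_bound:
  assumes w: "0 < w" and a: "0 < a"
  shows "w * \<bar>Qd \<alpha> \<beta> \<gamma> \<delta> a w\<bar> \<le> QM \<alpha> \<beta> \<gamma> \<delta> a / w"
proof -
  have t1: "\<bar>w * (\<alpha>/w^2)\<bar> \<le> \<bar>\<alpha>\<bar>/w" using w by (simp add: abs_mult power2_eq_square)
  have t2: "\<bar>w*(\<beta>/(w+a)^2)\<bar> \<le> \<bar>\<beta>\<bar>/w"
  proof -
    have "\<bar>w*(\<beta>/(w+a)^2)\<bar> = \<bar>\<beta>\<bar> * (w/(w+a)^2)" using w a by (simp add: abs_mult)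
    also have "\<dots> \<le> \<bar>\<beta>\<bar> * (1/w)" by (intro mult_left_mono ineq4 w a) simp
    finally show ?thesis by simp
  qed
  have t3: "\<bar>w*(2*\<gamma>/(w+a)^3)\<bar> \<le> 2*\<bar>\<gamma>\<bar>/a/w"
  proof -
    have "\<bar>w*(2*\<gamma>/(w+a)^3)\<bar> = 2*\<bar>\<gamma>\<bar> * (w/(w+a)^3)" using w a by (simp add: abs_mult)
    also have "\<dots> \<le> 2*\<bar>\<gamma>\<bar> * (1/(a*w))" by (intro mult_left_mono ineq5 w a) simp
    also have "\<dots> = 2*\<bar>\<gamma>\<bar>/a/w" by simp
    finally show ?thesis .
  qed
  have t4: "\<bar>w*(3*\<delta>/(w+a)^4)\<bar> \<le> 3*\<bar>\<delta>\<bar>/a^2/w"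
  proof -
    have "\<bar>w*(3*\<delta>/(w+a)^4)\<bar> = 3*\<bar>\<delta>\<bar> * (w/(w+a)^4)" using w a by (simp add: abs_mult)
    also have "\<dots> \<le> 3*\<bar>\<delta>\<bar> * (1/(a^2*w))" by (intro mult_left_mono ineq6 w a) simp
    also have "\<dots> = 3*\<bar>\<delta>\<bar>/a^2/w" by simp
    finally show ?thesis .
  qed
  have "w * \<bar>Qd \<alpha> \<beta> \<gamma> \<delta> a w\<bar> = \<bar>w * (\<alpha>/w^2) + w*(\<beta>/(w+a)^2) + w*(2*\<gamma>/(w+a)^3) + w*(3*\<delta>/(w+a)^4)\<bar>"
  proof -
    have "w * Qd \<alpha> \<beta> \<gamma> \<delta> a w = - (w * (\<alpha>/w^2) + w*(\<beta>/(w+a)^2) + w*(2*\<gamma>/(w+a)^3) + w*(3*\<delta>/(w+a)^4))"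
      unfolding Qd_def by (simp add: algebra_simps)
    then show ?thesis using w by (metis abs_minus_cancel abs_mult abs_of_pos)
  qed
  also have "\<dots> \<le> \<bar>w * (\<alpha>/w^2)\<bar> + \<bar>w*(\<beta>/(w+a)^2)\<bar> + \<bar>w*(2*\<gamma>/(w+a)^3)\<bar> + \<bar>w*(3*\<delta>/(w+a)^4)\<bar>"
    by (rule abs4)
  also have "\<dots> \<le> \<bar>\<alpha>\<bar>/w + \<bar>\<beta>\<bar>/w + 2*\<bar>\<gamma>\<bar>/a/w + 3*\<bar>\<delta>\<bar>/a^2/w"
    using t1 t2 t3 t4 by linarith
  also have "\<dots> = QM \<alpha> \<beta> \<gamma> \<delta> a / w" unfolding QM_def by (simp add: add_divide_distrib)
  finally show ?thesis .
qed

lemma inv_norm_le: "0 < (nx::real) \<Longrightarrow> 1/nx \<le> 1 + 1/nx^2"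
proof (cases "nx \<le> 1")
  case True
  assume h: "0 < nx"
  then have "nx^2 \<le> nx" using True by (simp add: power2_eq_square mult_left_le_one_le)
  then have "1/nx \<le> 1/nx^2" using h by (intro divide_left_mono) auto
  then show ?thesis by simp
next
  case False
  then have "1/nx \<le> 1" by simp
  then show ?thesis by (smt (verit) divide_nonneg_nonneg zero_le_power2)
qed

lemma coef_bound:
  fixes t W nx T M nth qd q :: real
  assumes t: "1 \<le> t" and nx: "0 < nx" and W: "W = nx^2" and T: "\<bar>T\<bar> \<le> nth * nx" and nth: "0 \<le> nth"
   and qd: "(t^2*W) * \<bar>qd\<bar> \<le> M/(t^2*W)" and q: "\<bar>q\<bar> \<le> M/(t^2*W)" and M: "0 \<le> M"
  shows "\<bar>2*t*W*qd - q*(t*W - T)\<bar> \<le> M * ((2 + nth)/W + 1 + nth)"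
proof -
  have Wp: "0 < W" using W nx by simp
  have u: "0 < t^2*W" using Wp t by simp
  have A: "\<bar>2*t*W*qd\<bar> \<le> 2*M/W"
  proof -
    have "(t^2*W) * \<bar>qd\<bar> * (t^2*W) \<le> M" using qd u by (simp add: le_divide_eq)
    then have "\<bar>qd\<bar> * (t^2*W)^2 \<le> M" by (simp add: power2_eq_square algebra_simps)
    moreover have "0 < (t^2*W)^2" using u by (simp only: zero_less_power2)
    ultimately have "\<bar>qd\<bar> \<le> M/(t^2*W)^2" by (simp add: le_divide_eq del: zero_less_power2)
    then have qq: "\<bar>qd\<bar> \<le> M/(t^2*W)^2" .
    have e: "\<bar>2*t*W*qd\<bar> = (2*t*W)*\<bar>qd\<bar>" using t Wp by (simp add: abs_mult)
    have "(2*t*W)*\<bar>qd\<bar> \<le> (2*t*W)*(M/(t^2*W)^2)" by (rule mult_left_mono[OF qq]) (use t Wp in simp)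
    then have "\<bar>2*t*W*qd\<bar> \<le> 2*t*W*(M/(t^2*W)^2)" using e by linarith
    also have "\<dots> = 2*M/(t^3*W)" using t Wp by (simp add: field_simps power2_eq_square power3_eq_cube)
    also have "\<dots> \<le> 2*M/W"
    proof (rule divide_left_mono)
      have "1 \<le> t^3" using t by (simp add: one_le_power)
      then show "W \<le> t^3*W" using Wp by simp
    qed (use M Wp t in auto)
    finally show ?thesis .
  qed
  have B1: "\<bar>q * (t*W)\<bar> \<le> M"
  proof -
    have e: "\<bar>q * (t*W)\<bar> = \<bar>q\<bar> * (t*W)" using t Wp by (simp add: abs_mult)
    have "\<bar>q\<bar> * (t*W) \<le> M/(t^2*W) * (t*W)" by (rule mult_right_mono[OF q]) (use t Wp in simp)
    then have "\<bar>q * (t*W)\<bar> \<le> M/(t^2*W) * (t*W)" using e by linarith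
    also have "\<dots> = M / t" using t Wp by (simp add: field_simps power2_eq_square)
    also have "\<dots> \<le> M" using t M by (simp add: divide_le_eq mult_le_cancel_left1)
    finally show ?thesis .
  qed
  have B2: "\<bar>q * T\<bar> \<le> M * nth * (1 + 1/W)"
  proof -
    have "\<bar>q\<bar> * \<bar>T\<bar> \<le> M/(t^2*W) * (nth * nx)" by (rule mult_mono[OF q T]) (use M u in auto)
    then have "\<bar>q * T\<bar> \<le> M/(t^2*W) * (nth * nx)" by (simp add: abs_mult)
    also have "\<dots> \<le> M/W * (nth*nx)"
    proof (intro mult_right_mono divide_left_mono)
      show "W \<le> t^2*W" using t Wp by (simp add: one_le_power)
    qed (use M Wp t nth nx in auto)
    also have "\<dots> = M * nth * (1/nx)" using W nx by (simp add: field_simps power2_eq_square)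
    also have "\<dots> \<le> M * nth * (1 + 1/W)" unfolding W by (rule mult_left_mono[OF inv_norm_le[OF nx]]) (use M nth in simp)
    finally show ?thesis .
  qed
  have "\<bar>2*t*W*qd - q*(t*W - T)\<bar> \<le> \<bar>2*t*W*qd\<bar> + \<bar>q * (t*W)\<bar> + \<bar>q * T\<bar>"
    by (simp add: right_diff_distrib)
  also have "\<dots> \<le> 2*M/W + M + M * nth * (1 + 1/W)" using A B1 B2 by linarith
  also have "\<dots> = M * ((2 + nth)/W + 1 + nth)" using Wp by (simp add: field_simps)
  finally show ?thesis .
qed

lemma Qf_meas[measurable]: "Qf \<alpha> \<beta> \<gamma> \<delta> a \<in> borel_measurable borel"
  unfolding Qf_def[abs_def] by measurable
lemma Qd_meas[measurable]: "Qd \<alpha> \<beta> \<gamma> \<delta> a \<in> borel_measurable borel"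
  unfolding Qd_def[abs_def] by measurable
lemma gd_meas[measurable]: "gauss_density \<theta> \<in> borel_measurable borel"
  unfolding gauss_density_def[abs_def] by measurable

definition gK :: "nat \<Rightarrow> real" where "gK n = (2*pi) powr (- real n / 2)"
lemma gK_pos: "0 < gK n" by (simp add: gK_def)
lemma gd_def': "gauss_density \<theta> x = gK CARD('n) * exp (-(norm (x-\<theta>))\<^sup>2/2)" for \<theta> x :: "real^'n"
  by (simp add: gauss_density_def gK_def)
lemma gd_nonneg: "0 \<le> gauss_density \<theta> x"
  by (simp add: gauss_density_def)

lemma norm_scale_sub: "(norm (s *\<^sub>R x - \<theta>))\<^sup>2 = s\<^sup>2 * (norm x)\<^sup>2 - 2 * s * (\<theta> \<bullet> x) + (norm \<theta>)\<^sup>2"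
  for x \<theta> :: "'a::real_inner"
  unfolding power2_norm_eq_inner by (simp add: inner_diff_left inner_diff_right inner_commute algebra_simps power2_eq_square)

lemma norm_scale_sq: "(norm (s *\<^sub>R x))\<^sup>2 = s\<^sup>2 * (norm x)\<^sup>2"
  for x :: "'a::real_normed_vector"
  by (simp add: power_mult_distrib)

lemma gd_upper:
  fixes \<theta> x :: "real^'n" assumes t: "1 \<le> t"
  shows "gauss_density \<theta> (t *\<^sub>R x) \<le> gK CARD('n) * exp ((norm \<theta>)\<^sup>2/2) * exp (-(norm x)\<^sup>2/4)"
proof -
  have tri: "norm (t *\<^sub>R x) \<le> norm \<theta> + norm (t *\<^sub>R x - \<theta>)" by (rule norm_triangle_sub)
  have "(norm (t *\<^sub>R x))\<^sup>2 \<le> (norm \<theta> + norm (t *\<^sub>R x - \<theta>))\<^sup>2"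
    using tri by (intro power_mono) auto
  also have "\<dots> \<le> 2*(norm \<theta>)\<^sup>2 + 2*(norm (t *\<^sub>R x - \<theta>))\<^sup>2"
    by (smt (verit, best) sum_squares_bound power2_sum power2_diff zero_le_power2)
  finally have A: "(norm (t *\<^sub>R x))\<^sup>2 \<le> 2*(norm \<theta>)\<^sup>2 + 2*(norm (t *\<^sub>R x - \<theta>))\<^sup>2" .
  have "(norm x)\<^sup>2 \<le> (norm (t *\<^sub>R x))\<^sup>2"
    unfolding norm_scale_sq using t by (simp add: one_le_power mult_le_cancel_right1)
  with A have "-(norm (t *\<^sub>R x - \<theta>))\<^sup>2/2 \<le> (norm \<theta>)\<^sup>2/2 + (-(norm x)\<^sup>2/4)" by linarith
  then have "exp (-(norm (t *\<^sub>R x - \<theta>))\<^sup>2/2) \<le> exp ((norm \<theta>)\<^sup>2/2) * exp (-(norm x)\<^sup>2/4)"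
    by (simp flip: exp_add)
  then show ?thesis unfolding gd_def' using gK_pos
    by (simp add: mult.assoc)
qed

lemma gd_lower:
  fixes \<theta> x :: "real^'n" assumes "norm x \<le> 1"
  shows "gK CARD('n) * exp (-(1 + norm \<theta>)\<^sup>2/2) \<le> gauss_density \<theta> x"
proof -
  have "norm (x - \<theta>) \<le> 1 + norm \<theta>" using assms norm_triangle_ineq4[of x \<theta>] by linarith
  then have "(norm (x - \<theta>))\<^sup>2 \<le> (1 + norm \<theta>)\<^sup>2" by (intro power_mono) auto
  then have "exp (-(1 + norm \<theta>)\<^sup>2/2) \<le> exp (-(norm (x-\<theta>))\<^sup>2/2)" by simp
  then show ?thesis unfolding gd_def' using gK_pos by simp
qed

lemma exp_W_integrable: "integrable lborel (\<lambda>x::'a::euclidean_space. exp (-(norm x)\<^sup>2/4))"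
  using gauss_integrable[of "sqrt 2", where 'a='a] by simp

lemma expW_div_integrable:
  fixes \<theta> :: "real^'n"
  assumes gi: "integrable lborel (\<lambda>x. gauss_density \<theta> x / (norm x)\<^sup>2)"
  shows "integrable lborel (\<lambda>x::real^'n. exp (-(norm x)\<^sup>2/4) / (norm x)\<^sup>2)"
proof -
  define \<kappa> where "\<kappa> = gK CARD('n) * exp (-(1 + norm \<theta>)\<^sup>2/2)"
  have kp: "0 < \<kappa>" unfolding \<kappa>_def using gK_pos by simp
  have "integrable lborel (\<lambda>x. (1/\<kappa>) * (gauss_density \<theta> x / (norm x)\<^sup>2) + exp (-(norm x)\<^sup>2/4))"
    by (intro Bochner_Integration.integrable_add Bochner_Integration.integrable_mult_right gi exp_W_integrable)
  then show ?thesis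
  proof (rule Bochner_Integration.integrable_bound)
    show "(\<lambda>x::real^'n. exp (-(norm x)\<^sup>2/4) / (norm x)\<^sup>2) \<in> borel_measurable lborel" by measurable
    show "AE x in lborel. norm (exp (-(norm x)\<^sup>2/4) / (norm x)\<^sup>2) \<le> norm ((1/\<kappa>) * (gauss_density \<theta> x / (norm x)\<^sup>2) + exp (-(norm x)\<^sup>2/4))"
    proof (rule AE_I2)
      fix x :: "real^'n"
      have g0: "0 \<le> gauss_density \<theta> x" by (rule gd_nonneg)
      have r0: "0 \<le> (1/\<kappa>) * (gauss_density \<theta> x / (norm x)\<^sup>2)" using kp g0 by simp
      have "exp (-(norm x)\<^sup>2/4) / (norm x)\<^sup>2 \<le> (1/\<kappa>) * (gauss_density \<theta> x / (norm x)\<^sup>2) + exp (-(norm x)\<^sup>2/4)"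
      proof (cases "norm x \<le> 1")
        case True
        have "exp (-(norm x)\<^sup>2/4) \<le> 1" by simp
        also have "1 \<le> gauss_density \<theta> x / \<kappa>" using gd_lower[OF True, of \<theta>] kp unfolding \<kappa>_def by simp
        finally have "exp (-(norm x)\<^sup>2/4) / (norm x)\<^sup>2 \<le> (gauss_density \<theta> x / \<kappa>) / (norm x)\<^sup>2"
          by (intro divide_right_mono) auto
        also have "\<dots> = (1/\<kappa>) * (gauss_density \<theta> x / (norm x)\<^sup>2)" by simp
        finally have "exp (-(norm x)\<^sup>2/4) / (norm x)\<^sup>2 \<le> (1/\<kappa>) * (gauss_density \<theta> x / (norm x)\<^sup>2)" .
        moreover have "0 \<le> exp (-(norm x)\<^sup>2/4)" by simp
        ultimately show ?thesis by linarith
      next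
        case False
        then have "1 \<le> (norm x)\<^sup>2" by (simp add: one_le_power)
        then have "exp (-(norm x)\<^sup>2/4) / (norm x)\<^sup>2 \<le> exp (-(norm x)\<^sup>2/4)"
          by (simp add: divide_le_eq mult_le_cancel_left1)
        then show ?thesis using r0 by linarith
      qed
      then show "norm (exp (-(norm x)\<^sup>2/4) / (norm x)\<^sup>2) \<le> norm ((1/\<kappa>) * (gauss_density \<theta> x / (norm x)\<^sup>2) + exp (-(norm x)\<^sup>2/4))"
        using r0 by simp
    qed
  qed
qed

lemma stein:
  fixes \<theta> :: "real^'n" and a \<alpha> \<beta> \<gamma> \<delta> :: real
  assumes a: "0 < a" and gi: "integrable lborel (\<lambda>x. gauss_density \<theta> x / (norm x)\<^sup>2)"
  defines "S \<equiv> \<lambda>x. Qf \<alpha> \<beta> \<gamma> \<delta> a ((norm x)\<^sup>2) * ((norm x)\<^sup>2 - \<theta> \<bullet> x)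
                  - real CARD('n) * Qf \<alpha> \<beta> \<gamma> \<delta> a ((norm x)\<^sup>2)
                  - 2 * (norm x)\<^sup>2 * Qd \<alpha> \<beta> \<gamma> \<delta> a ((norm x)\<^sup>2)"
  shows "integrable lborel (\<lambda>x. S x * gauss_density \<theta> x) \<and> (\<integral>x. S x * gauss_density \<theta> x \<partial>lborel) = 0"
proof -
  define Q where "Q = Qf \<alpha> \<beta> \<gamma> \<delta> a"
  define Q' where "Q' = Qd \<alpha> \<beta> \<gamma> \<delta> a"
  define M where "M = QM \<alpha> \<beta> \<gamma> \<delta> a"
  define K where "K = gK CARD('n)"
  define N where "N = (norm \<theta>)\<^sup>2"
  define f where "f x = Q ((norm x)\<^sup>2) * gauss_density \<theta> x" for x :: "real^'n"
  define g where "g t x = (2*t*(norm x)\<^sup>2 * Q' (t\<^sup>2*(norm x)\<^sup>2) - Q (t\<^sup>2*(norm x)\<^sup>2) * (t*(norm x)\<^sup>2 - \<theta>\<bullet>x)) * gauss_density \<theta> (t *\<^sub>R x)" for t and x :: "real^'n"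
  define C1 where "C1 = M * (2 + norm \<theta>) * (K * exp (N/2))"
  define C2 where "C2 = M * (1 + norm \<theta>) * (K * exp (N/2))"
  define B where "B x = C1 * (exp (-(norm x)\<^sup>2/4) / (norm x)\<^sup>2) + C2 * exp (-(norm x)\<^sup>2/4)" for x :: "real^'n"
  have fm[measurable]: "f \<in> borel_measurable borel" unfolding f_def[abs_def] Q_def by measurable
  have gm[measurable]: "g 1 \<in> borel_measurable borel" unfolding g_def[abs_def] Q_def Q'_def by measurable
  have Mnn: "0 \<le> M" unfolding M_def using a by (rule QM_nonneg)
  have Kpos: "0 < K" unfolding K_def by (rule gK_pos)
  have Bi: "integrable lborel B"
    unfolding B_def[abs_def]
    by (intro Bochner_Integration.integrable_add Bochner_Integration.integrable_mult_right
          expW_div_integrable[OF gi] exp_W_integrable)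
  have fi: "integrable lborel f"
  proof -
    have "integrable lborel (\<lambda>x. M * (gauss_density \<theta> x / (norm x)\<^sup>2))"
      using gi by (rule Bochner_Integration.integrable_mult_right)
    then show ?thesis
    proof (rule Bochner_Integration.integrable_bound)
      show "f \<in> borel_measurable lborel" by measurable
      show "AE x in lborel. norm (f x) \<le> norm (M * (gauss_density \<theta> x / (norm x)\<^sup>2))"
        using AE_lborel_singleton[of 0]
      proof (rule AE_mp, intro AE_I2 impI)
        fix x :: "real^'n" assume x: "x \<noteq> 0"
        then have w: "0 < (norm x)\<^sup>2" by simp
        have "\<bar>f x\<bar> = \<bar>Q ((norm x)\<^sup>2)\<bar> * gauss_density \<theta> x"
          unfolding f_def by (simp add: abs_mult gd_nonneg)
        also have "\<dots> \<le> (M / (norm x)\<^sup>2) * gauss_density \<theta> x"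
          unfolding Q_def M_def by (intro mult_right_mono Q_bound w a gd_nonneg)
        also have "\<dots> = M * (gauss_density \<theta> x / (norm x)\<^sup>2)" by simp
        finally show "norm (f x) \<le> norm (M * (gauss_density \<theta> x / (norm x)\<^sup>2))"
          using Mnn gd_nonneg[of \<theta> x] by simp
      qed
    qed
  qed
  have der: "((\<lambda>s. f (s *\<^sub>R x)) has_real_derivative g t x) (at t)" if t: "1 \<le> t" "t \<le> 2" for x t
  proof (cases "x = 0")
    case True
    then show ?thesis by (simp add: g_def)
  next
    case False
    define W where "W = (norm x)\<^sup>2"
    define T where "T = \<theta> \<bullet> x"
    have Wp: "0 < W" using False by (simp add: W_def)
    have u: "0 < t\<^sup>2 * W" using Wp t by simp
    have fe: "(\<lambda>s. f (s *\<^sub>R x)) = (\<lambda>s. Q (s\<^sup>2 * W) * (K * exp (-(s\<^sup>2 * W - 2 * s * T + N)/2)))"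
      by (rule ext) (simp add: f_def gd_def' K_def N_def W_def T_def norm_scale_sub power_mult_distrib)
    have d1: "((\<lambda>s. s\<^sup>2 * W) has_real_derivative 2*t*W) (at t)"
      by (auto intro!: derivative_eq_intros)
    have dQ: "(Q has_real_derivative Q' (t\<^sup>2 * W)) (at (t\<^sup>2 * W))"
      unfolding Q_def Q'_def by (rule Q_deriv[OF u a])
    have dQc: "((\<lambda>s. Q (s\<^sup>2 * W)) has_real_derivative Q' (t\<^sup>2 * W) * (2*t*W)) (at t)"
      by (rule DERIV_chain2[OF dQ d1])
    have dE: "((\<lambda>s. K * exp (-(s\<^sup>2 * W - 2 * s * T + N)/2)) has_real_derivative
               K * (exp (-(t\<^sup>2 * W - 2 * t * T + N)/2) * (-(2*t*W - 2*T)/2))) (at t)"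
      apply (rule derivative_eq_intros refl | simp)+
      apply (simp add: field_simps)?
      done
    have ge: "g t x = Q' (t\<^sup>2 * W) * (2*t*W) * (K * exp (-(t\<^sup>2 * W - 2 * t * T + N)/2))
               + K * (exp (-(t\<^sup>2 * W - 2 * t * T + N)/2) * (-(2*t*W - 2*T)/2)) * Q (t\<^sup>2 * W)"
      unfolding g_def gd_def' W_def[symmetric] T_def[symmetric] norm_scale_sub K_def[symmetric] N_def[symmetric]
      by (simp add: field_simps)
    show ?thesis unfolding fe ge by (rule DERIV_mult[OF dQc dE])
  qed
  have bd: "\<bar>g t x\<bar> \<le> B x" if t: "1 \<le> t" "t \<le> 2" for x t
  proof (cases "x = 0")
    case True
    have "0 \<le> B x" unfolding B_def C1_def C2_def True using Mnn Kpos by simp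
    then show ?thesis using True by (simp add: g_def)
  next
    case False
    define W where "W = (norm x)\<^sup>2"
    define T where "T = \<theta> \<bullet> x"
    have nx: "0 < norm x" using False by simp
    have Wp: "0 < W" using False by (simp add: W_def)
    have u: "0 < t\<^sup>2 * W" using Wp t by simp
    have cb: "\<bar>2*t*W*Q' (t\<^sup>2*W) - Q (t\<^sup>2*W) * (t*W - T)\<bar> \<le> M * ((2 + norm \<theta>)/W + 1 + norm \<theta>)"
    proof (rule coef_bound[OF t(1) nx W_def])
      show "\<bar>T\<bar> \<le> norm \<theta> * norm x" unfolding T_def by (rule Cauchy_Schwarz_ineq2)
      show "t\<^sup>2 * W * \<bar>Q' (t\<^sup>2 * W)\<bar> \<le> M / (t\<^sup>2 * W)" unfolding Q'_def M_def by (rule Qd_bound[OF u a])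
      show "\<bar>Q (t\<^sup>2 * W)\<bar> \<le> M / (t\<^sup>2 * W)" unfolding Q_def M_def by (rule Q_bound[OF u a])
    qed (use Mnn in auto)
    have gu: "gauss_density \<theta> (t *\<^sub>R x) \<le> K * exp (N/2) * exp (-W/4)"
      using gd_upper[OF t(1), of \<theta> x] unfolding K_def N_def W_def by simp
    have "\<bar>g t x\<bar> = \<bar>2*t*W*Q' (t\<^sup>2*W) - Q (t\<^sup>2*W) * (t*W - T)\<bar> * gauss_density \<theta> (t *\<^sub>R x)"
      unfolding g_def W_def T_def by (simp add: abs_mult gd_nonneg)
    also have "\<dots> \<le> M * ((2 + norm \<theta>)/W + 1 + norm \<theta>) * (K * exp (N/2) * exp (-W/4))"
      by (rule mult_mono[OF cb gu]) (use Mnn Wp gd_nonneg in auto)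
    also have "\<dots> = B x" unfolding B_def C1_def C2_def W_def[symmetric] by (simp add: algebra_simps add_divide_distrib)
    finally show ?thesis .
  qed
  have eu: "integral\<^sup>L lborel (g 1) = - real DIM(real^'n) * integral\<^sup>L lborel f"
    by (rule euler_identity[OF fm gm fi Bi der bd])
  have g1i: "integrable lborel (g 1)"
    using Bi by (rule Bochner_Integration.integrable_bound) (use bd[of 1] in \<open>auto intro!: AE_I2 order_trans[OF _ abs_ge_self]\<close>)
  have eqS: "(\<lambda>x. S x * gauss_density \<theta> x) = (\<lambda>x. - (g 1 x + real CARD('n) * f x))"
    by (rule ext) (simp add: S_def g_def f_def Q_def Q'_def algebra_simps)
  have i: "integrable lborel (\<lambda>x. S x * gauss_density \<theta> x)"
    unfolding eqS using g1i fi by auto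
  have "(\<integral>x. S x * gauss_density \<theta> x \<partial>lborel) = - (integral\<^sup>L lborel (g 1) + real CARD('n) * integral\<^sup>L lborel f)"
    unfolding eqS using g1i fi by simp
  also have "\<dots> = 0" using eu by simp
  finally show ?thesis using i by simp
qed

lemma ident:
  fixes W T N a p :: real
  assumes W: "0 < W" and a: "0 < a"
  defines "c \<equiv> p - 2"
  shows "((1 - c/W)^2 * W - 2*(1 - c/W)*T + N) - ((1 - c/(W+a))^2 * W - 2*(1 - c/(W+a))*T + N)
       = (Qf (-c) c (-c*a) (c*a*(4-a)) a W * (W - T) - p * Qf (-c) c (-c*a) (c*a*(4-a)) a W
          - 2 * W * Qd (-c) c (-c*a) (c*a*(4-a)) a W)
         + c * a * ((a/(W*(W+a)^2) + (4-a)/(W+a)^3) * T)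
         + c * a * ((((4-a)*p - (a^2-6*a+24))*W + a*((4-a)*p - a^2))/(W+a)^4)"
proof -
  have Wa: "W + a \<noteq> 0" "W \<noteq> 0" using W a by auto
  show ?thesis unfolding Qf_def Qd_def c_def using Wa
    apply (simp add: divide_simps) by algebra
qed

lemma JS_meas[measurable]: "JS_est \<in> borel_measurable borel"
  unfolding JS_est_def[abs_def] by measurable
lemma shrink_meas[measurable]: "shrink_est a c \<in> borel_measurable borel"
  unfolding shrink_est_def[abs_def] by measurable

lemma gd_integrable: "integrable lborel (gauss_density (\<theta>::real^'n))"
proof -
  have "integrable lborel (\<lambda>x::real^'n. gK CARD('n) * exp ((norm \<theta>)\<^sup>2/2) * exp (-(norm x)\<^sup>2/4))"
    using exp_W_integrable by auto
  then show ?thesis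
  proof (rule Bochner_Integration.integrable_bound)
    show "AE x in lborel. norm (gauss_density \<theta> x) \<le> norm (gK CARD('n) * exp ((norm \<theta>)\<^sup>2/2) * exp (-(norm (x::real^'n))\<^sup>2/4))"
    proof (rule AE_I2)
      fix x :: "real^'n"
      have "gauss_density \<theta> x \<le> gK CARD('n) * exp ((norm \<theta>)\<^sup>2/2) * exp (-(norm x)\<^sup>2/4)"
        using gd_upper[of 1 \<theta> x] by simp
      then show "norm (gauss_density \<theta> x) \<le> norm (gK CARD('n) * exp ((norm \<theta>)\<^sup>2/2) * exp (-(norm x)\<^sup>2/4))"
        using gd_nonneg[of \<theta> x] gK_pos by simp
    qed
  qed measurable
qed

lemma risk_eq:
  fixes \<theta> :: "real^'n"
  assumes [measurable]: "est \<in> borel_measurable borel"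
  shows "risk \<theta> est = (\<integral>\<^sup>+x. ennreal (gauss_density \<theta> x * (norm (est x - \<theta>))\<^sup>2) \<partial>lborel)"
  unfolding risk_def gauss_vec_def
  by (subst nn_integral_density) (auto simp: ennreal_mult gd_nonneg)

lemma sq_tri: "(norm (u::'a::real_normed_vector))\<^sup>2 \<le> 2 * (norm (u - v))\<^sup>2 + 2 * (norm v)\<^sup>2"
proof -
  have "norm u \<le> norm v + norm (u - v)" by (rule norm_triangle_sub)
  then have "(norm u)\<^sup>2 \<le> (norm v + norm (u - v))\<^sup>2" by (intro power_mono) auto
  also have "\<dots> \<le> 2*(norm (u-v))\<^sup>2 + 2*(norm v)\<^sup>2"
    by (smt (verit, best) sum_squares_bound power2_sum power2_diff zero_le_power2)
  finally show ?thesis .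
qed

lemma k_bound:
  fixes W a :: real
  assumes W: "0 < W" and a: "0 < a" "a < 4"
  shows "0 \<le> a/(W*(W+a)^2) + (4-a)/(W+a)^3 \<and> a/(W*(W+a)^2) + (4-a)/(W+a)^3 \<le> 4/(a^2*W)"
proof
  show "0 \<le> a/(W*(W+a)^2) + (4-a)/(W+a)^3" using W a by simp
  have t1: "a/(W*(W+a)^2) \<le> a/(W*a^2)"
  proof (rule div_le_aux)
    have "a^2 \<le> (W+a)^2" using W a by (intro power_mono) auto
    then show "W*a^2 \<le> W*(W+a)^2" using W by simp
  qed (use W a in auto)
  have t2: "(4-a)/(W+a)^3 \<le> (4-a)/(a^2*W)"
  proof (rule div_le_aux)
    show "a^2*W \<le> (W+a)^3" using ineq3[OF W a(1)] W a by (simp add: divide_simps)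
  qed (use W a in auto)
  have "a/(W*a^2) + (4-a)/(a^2*W) = 4/(a^2*W)" using W a by (simp add: field_simps power2_eq_square)
  then show "a/(W*(W+a)^2) + (4-a)/(W+a)^3 \<le> 4/(a^2*W)" using t1 t2 by linarith
qed

lemma G_bound:
  fixes W a A B :: real
  assumes W: "0 \<le> W" and a: "0 < a" and A: "0 \<le> A" and B: "0 \<le> B"
  shows "0 \<le> (A*W + B)/(W+a)^4 \<and> (A*W + B)/(W+a)^4 \<le> (A + B/a)/a^3"
proof
  show "0 \<le> (A*W + B)/(W+a)^4" using W a A B by simp
  have wa: "0 < W + a" using W a by simp
  have "a^3 \<le> (W+a)^3" using W a by (intro power_mono) auto
  then have d: "a^3 * (W+a) \<le> (W+a)^4" using wa by (simp add: eval_nat_numeral)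
  have n: "A*W + B \<le> (A + B/a) * (W+a)"
  proof -
    have "B \<le> B/a * (W + a)" using a W B by (simp add: field_simps)
    moreover have "A*W \<le> A*(W+a)" using A a by (simp add: mult_left_mono)
    ultimately show ?thesis by (simp add: algebra_simps)
  qed
  have "(A*W + B)/(W+a)^4 \<le> (A*W + B)/(a^3 * (W+a))"
    by (rule div_le_aux) (use W a A B d wa in auto)
  also have "\<dots> \<le> ((A + B/a) * (W+a))/(a^3 * (W+a))"
    by (rule divide_right_mono[OF n]) (use a wa in simp)
  also have "\<dots> = (A + B/a)/a^3" using wa by simp
  finally show "(A*W + B)/(W+a)^4 \<le> (A + B/a)/a^3" .
qed

lemma neg_sym:
  fixes h :: "real^'n \<Rightarrow> real"
  assumes "integrable lborel h"
  shows "integrable lborel (\<lambda>x. h (-x)) \<and> integral\<^sup>L lborel h = integral\<^sup>L lborel (\<lambda>x. h (-x))"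
  using integral_scale[OF assms, of "-1"] integrable_scale[OF assms, of "-1"] by simp

lemma gd_sym:
  fixes \<theta> x :: "real^'n"
  shows "0 \<le> (\<theta> \<bullet> x) * (gauss_density \<theta> x - gauss_density \<theta> (-x))"
proof -
  have e1: "(norm (x - \<theta>))\<^sup>2 = (norm x)\<^sup>2 - 2*(\<theta> \<bullet> x) + (norm \<theta>)\<^sup>2"
    using norm_scale_sub[of 1 x \<theta>] by simp
  have e2: "(norm (-x - \<theta>))\<^sup>2 = (norm x)\<^sup>2 + 2*(\<theta> \<bullet> x) + (norm \<theta>)\<^sup>2"
    using norm_scale_sub[of "-1" x \<theta>] by simp
  show ?thesis
  proof (cases "0 \<le> \<theta> \<bullet> x")
    case True
    then have "exp (-(norm (-x - \<theta>))\<^sup>2/2) \<le> exp (-(norm (x - \<theta>))\<^sup>2/2)" unfolding e1 e2 by simp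
    then have "gauss_density \<theta> (-x) \<le> gauss_density \<theta> x" unfolding gd_def' using gK_pos
      by (simp add: mult_left_mono)
    then show ?thesis using True by simp
  next
    case False
    then have "exp (-(norm (x - \<theta>))\<^sup>2/2) \<le> exp (-(norm (-x - \<theta>))\<^sup>2/2)" unfolding e1 e2 by simp
    then have "gauss_density \<theta> x \<le> gauss_density \<theta> (-x)" unfolding gd_def' using gK_pos
      by (simp add: mult_left_mono)
    then show ?thesis using False by (simp add: mult_nonpos_nonpos)
  qed
qed

lemma kT_nonneg:
  fixes \<theta> :: "real^'n" and k :: "real \<Rightarrow> real"
  assumes k: "\<And>w. 0 \<le> w \<Longrightarrow> 0 \<le> k w"
  and i: "integrable lborel (\<lambda>x. k ((norm x)\<^sup>2) * (\<theta> \<bullet> x) * gauss_density \<theta> x)"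
  shows "0 \<le> (\<integral>x. k ((norm x)\<^sup>2) * (\<theta> \<bullet> x) * gauss_density \<theta> x \<partial>lborel)"
proof -
  define h where "h x = k ((norm x)\<^sup>2) * (\<theta> \<bullet> x) * gauss_density \<theta> x" for x :: "real^'n"
  have hi: "integrable lborel h" using i unfolding h_def .
  from neg_sym[OF hi] have hn: "integrable lborel (\<lambda>x. h (-x))" and e: "integral\<^sup>L lborel h = integral\<^sup>L lborel (\<lambda>x. h (-x))"
    by auto
  have "2 * integral\<^sup>L lborel h = integral\<^sup>L lborel (\<lambda>x. h x + h (-x))"
    using hi hn e by simp
  also have "\<dots> = (\<integral>x. k ((norm x)\<^sup>2) * ((\<theta> \<bullet> x) * (gauss_density \<theta> x - gauss_density \<theta> (-x))) \<partial>lborel)"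
    unfolding h_def by (simp add: algebra_simps)
  also have "\<dots> \<ge> 0"
    by (intro integral_nonneg_AE AE_I2 mult_nonneg_nonneg k gd_sym zero_le_power2)
  finally show ?thesis unfolding h_def by simp
qed

theorem part1:
  fixes a :: real and \<theta> :: "real^'n"
  assumes a0: "0 < a" and a4: "a < 4" and hp: "2 * (12 - a) / (4 - a) \<le> real CARD('n)"
  shows "risk \<theta> (shrink_est a (real CARD('n) - 2)) \<le> risk \<theta> JS_est"
proof -
  define p where "p = real CARD('n)"
  define c where "c = p - 2"
  have hp': "24 - 2*a \<le> (4-a)*p" using hp a4 unfolding p_def by (simp add: divide_le_eq algebra_simps)
  have p6: "6 < p"
  proof -
    have "4*a \<le> (4-a)*(p-6)" using hp' by (simp add: algebra_simps)
    then have "0 < (4-a)*(p-6)" using a0 by linarith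
    then show ?thesis using a4 by (simp add: zero_less_mult_iff)
  qed
  have cpos: "0 < c" using p6 by (simp add: c_def)
  define A where "A = (4-a)*p - (a^2-6*a+24)"
  define B where "B = a*((4-a)*p - a^2)"
  have A0: "0 \<le> A"
  proof -
    have "0 \<le> a*(4-a)" using a0 a4 by simp
    moreover have "a*(4-a) = 4*a - a^2" by (simp add: algebra_simps power2_eq_square)
    ultimately show ?thesis unfolding A_def using hp' by linarith
  qed
  have B0: "0 \<le> B"
  proof -
    have "0 \<le> (4-a)*(6+a)" using a0 a4 by simp
    moreover have "(4-a)*(6+a) = 24 - 2*a - a^2" by (simp add: algebra_simps power2_eq_square)
    ultimately have "0 \<le> (4-a)*p - a^2" using hp' by linarith
    then show ?thesis unfolding B_def using a0 by simp
  qed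
  define N where "N = (norm \<theta>)\<^sup>2"
  define gd where "gd = gauss_density \<theta>"
  define LJ where "LJ x = (norm (JS_est x - \<theta>))\<^sup>2" for x
  define LA where "LA x = (norm (shrink_est a c x - \<theta>))\<^sup>2" for x
  define k where "k w = a/(w*(w+a)^2) + (4-a)/(w+a)^3" for w :: real
  define G where "G w = (A*w + B)/(w+a)^4" for w :: real
  define S where "S x = Qf (-c) c (-c*a) (c*a*(4-a)) a ((norm x)\<^sup>2) * ((norm x)\<^sup>2 - \<theta> \<bullet> x)
                  - real CARD('n) * Qf (-c) c (-c*a) (c*a*(4-a)) a ((norm x)\<^sup>2)
                  - 2 * (norm x)\<^sup>2 * Qd (-c) c (-c*a) (c*a*(4-a)) a ((norm x)\<^sup>2)" for x :: "real^'n"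
  have [measurable]: "gd \<in> borel_measurable borel" unfolding gd_def by measurable
  have [measurable]: "LJ \<in> borel_measurable borel" unfolding LJ_def[abs_def] by measurable
  have [measurable]: "LA \<in> borel_measurable borel" unfolding LA_def[abs_def] by measurable
  have [measurable]: "k \<in> borel_measurable borel" unfolding k_def[abs_def] by measurable
  have [measurable]: "G \<in> borel_measurable borel" unfolding G_def[abs_def] by measurable
  have [measurable]: "S \<in> borel_measurable borel" unfolding S_def[abs_def] by measurable
  have rJ: "risk \<theta> JS_est = (\<integral>\<^sup>+x. ennreal (gd x * LJ x) \<partial>lborel)"
    using risk_eq[OF JS_meas, of \<theta>] by (simp add: gd_def LJ_def)
  have rA: "risk \<theta> (shrink_est a (real CARD('n) - 2)) = (\<integral>\<^sup>+x. ennreal (gd x * LA x) \<partial>lborel)"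
    using risk_eq[OF shrink_meas, of \<theta> a "real CARD('n) - 2"] by (simp add: gd_def LA_def c_def p_def)
  have LJ_eq: "LJ x = (1 - c/(norm x)\<^sup>2)\<^sup>2 * (norm x)\<^sup>2 - 2*(1 - c/(norm x)\<^sup>2)*(\<theta> \<bullet> x) + N" for x
    unfolding LJ_def JS_est_def c_def p_def N_def by (rule norm_scale_sub)
  have LA_eq: "LA x = (1 - c/((norm x)\<^sup>2 + a))\<^sup>2 * (norm x)\<^sup>2 - 2*(1 - c/((norm x)\<^sup>2 + a))*(\<theta> \<bullet> x) + N" for x
    unfolding LA_def shrink_est_def N_def by (rule norm_scale_sub)
  show ?thesis
  proof (cases "(\<integral>\<^sup>+x. ennreal (gd x * LJ x) \<partial>lborel) = \<infinity>")
    case True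
    then show ?thesis by (simp add: rJ)
  next
    case False
    have iJ: "integrable lborel (\<lambda>x. gd x * LJ x)"
    proof (rule integrableI_nonneg)
      show "AE x in lborel. 0 \<le> gd x * LJ x" by (auto simp: gd_def gd_nonneg LJ_def)
      show "(\<integral>\<^sup>+x. ennreal (gd x * LJ x) \<partial>lborel) < \<infinity>" using False by (simp add: less_top)
    qed measurable
    have igd: "integrable lborel gd" unfolding gd_def by (rule gd_integrable)
    have gi: "integrable lborel (\<lambda>x. gd x / (norm x)\<^sup>2)"
    proof -
      have "integrable lborel (\<lambda>x. (1/c\<^sup>2) * (2*(gd x * LJ x) + (2*N + 2*c) * gd x))"
        using iJ igd by (intro Bochner_Integration.integrable_mult_right Bochner_Integration.integrable_add) auto
      then show ?thesis
      proof (rule Bochner_Integration.integrable_bound)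
        show "AE x in lborel. norm (gd x / (norm x)\<^sup>2) \<le> norm ((1/c\<^sup>2) * (2*(gd x * LJ x) + (2*N + 2*c) * gd x))"
        proof (rule AE_I2)
          fix x :: "real^'n"
          have g0: "0 \<le> gd x" unfolding gd_def by (rule gd_nonneg)
          have L0: "0 \<le> LJ x" unfolding LJ_def by simp
          have N0: "0 \<le> N" unfolding N_def by simp
          have r0: "0 \<le> (1/c\<^sup>2) * (2*(gd x * LJ x) + (2*N + 2*c) * gd x)"
            using g0 L0 N0 cpos by simp
          have "gd x / (norm x)\<^sup>2 \<le> (1/c\<^sup>2) * (2*(gd x * LJ x) + (2*N + 2*c) * gd x)"
          proof (cases "x = 0")
            case True then show ?thesis using r0 by simp
          next
            case False
            define W where "W = (norm x)\<^sup>2"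
            have Wp: "0 < W" using False by (simp add: W_def)
            have "(norm ((1 - c/W) *\<^sub>R x))\<^sup>2 \<le> 2 * (norm ((1 - c/W) *\<^sub>R x - \<theta>))\<^sup>2 + 2 * (norm \<theta>)\<^sup>2"
              by (rule sq_tri)
            moreover have "(norm ((1 - c/W) *\<^sub>R x - \<theta>))\<^sup>2 = LJ x"
              unfolding LJ_def JS_est_def W_def c_def p_def ..
            moreover have "(norm ((1 - c/W) *\<^sub>R x))\<^sup>2 = W - 2*c + c\<^sup>2/W"
              unfolding norm_scale_sq W_def[symmetric] using Wp by (simp add: field_simps power2_eq_square)
            ultimately have "c\<^sup>2/W \<le> 2 * LJ x + 2*N + 2*c" unfolding N_def using Wp by linarith
            then have "gd x * (c\<^sup>2/W) \<le> gd x * (2 * LJ x + 2*N + 2*c)" using g0 by (rule mult_left_mono)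
            then have "gd x / W * c\<^sup>2 \<le> 2*(gd x * LJ x) + (2*N + 2*c) * gd x" by (simp add: algebra_simps)
            then show ?thesis unfolding W_def[symmetric] using cpos by (simp add: field_simps)
          qed
          then show "norm (gd x / (norm x)\<^sup>2) \<le> norm ((1/c\<^sup>2) * (2*(gd x * LJ x) + (2*N + 2*c) * gd x))"
            unfolding real_norm_def abs_of_nonneg[OF r0] using g0 by simp
        qed
      qed measurable
    qed
    from stein[OF a0 gi[unfolded gd_def], of "-c" c "-c*a" "c*a*(4-a)"]
    have iS: "integrable lborel (\<lambda>x. S x * gd x)" and S0: "(\<integral>x. S x * gd x \<partial>lborel) = 0"
      unfolding S_def gd_def by auto
    have ikT: "integrable lborel (\<lambda>x. k ((norm x)\<^sup>2) * (\<theta> \<bullet> x) * gd x)"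
    proof -
      have "integrable lborel (\<lambda>x. (4 * norm \<theta> / a^2) * (gd x + gd x / (norm x)\<^sup>2))"
        using igd gi by (intro Bochner_Integration.integrable_mult_right Bochner_Integration.integrable_add) auto
      then show ?thesis
      proof (rule Bochner_Integration.integrable_bound)
        show "AE x in lborel. norm (k ((norm x)\<^sup>2) * (\<theta> \<bullet> x) * gd x) \<le> norm ((4 * norm \<theta> / a^2) * (gd x + gd x / (norm x)\<^sup>2))"
        proof (rule AE_I2)
          fix x :: "real^'n"
          have g0: "0 \<le> gd x" unfolding gd_def by (rule gd_nonneg)
          have r0: "0 \<le> (4 * norm \<theta> / a^2) * (gd x + gd x / (norm x)\<^sup>2)" using g0 by simp
          have "\<bar>k ((norm x)\<^sup>2) * (\<theta> \<bullet> x) * gd x\<bar> \<le> (4 * norm \<theta> / a^2) * (gd x + gd x / (norm x)\<^sup>2)"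
          proof (cases "x = 0")
            case True then show ?thesis using r0 by simp
          next
            case False
            define W where "W = (norm x)\<^sup>2"
            have nx: "0 < norm x" using False by simp
            have Wp: "0 < W" using False by (simp add: W_def)
            from k_bound[OF Wp a0 a4] have kb: "0 \<le> k W" "k W \<le> 4/(a^2*W)" unfolding k_def by auto
            have "\<bar>k W * (\<theta> \<bullet> x) * gd x\<bar> = k W * \<bar>\<theta> \<bullet> x\<bar> * gd x" using kb g0 by (simp add: abs_mult)
            also have "\<dots> \<le> (4/(a^2*W)) * (norm \<theta> * norm x) * gd x"
              by (intro mult_right_mono mult_mono kb Cauchy_Schwarz_ineq2 g0) (use Wp a0 in auto)
            also have "\<dots> = (4 * norm \<theta> / a^2) * (1/norm x) * gd x"
              unfolding W_def using nx a0 by (simp add: field_simps power2_eq_square)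
            also have "\<dots> \<le> (4 * norm \<theta> / a^2) * (1 + 1/W) * gd x"
              unfolding W_def by (intro mult_right_mono mult_left_mono inv_norm_le nx g0) (use a0 in simp)
            also have "\<dots> = (4 * norm \<theta> / a^2) * (gd x + gd x / W)" by (simp add: algebra_simps)
            finally show ?thesis unfolding W_def .
          qed
          then show "norm (k ((norm x)\<^sup>2) * (\<theta> \<bullet> x) * gd x) \<le> norm ((4 * norm \<theta> / a^2) * (gd x + gd x / (norm x)\<^sup>2))"
            unfolding real_norm_def abs_of_nonneg[OF r0] .
        qed
      qed measurable
    qed
    have iG: "integrable lborel (\<lambda>x. G ((norm x)\<^sup>2) * gd x)"
    proof -
      have "integrable lborel (\<lambda>x. ((A + B/a)/a^3) * gd x)"
        using igd by (intro Bochner_Integration.integrable_mult_right)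
      then show ?thesis
      proof (rule Bochner_Integration.integrable_bound)
        show "AE x in lborel. norm (G ((norm x)\<^sup>2) * gd x) \<le> norm (((A + B/a)/a^3) * gd x)"
        proof (rule AE_I2)
          fix x :: "real^'n"
          have g0: "0 \<le> gd x" unfolding gd_def by (rule gd_nonneg)
          from G_bound[OF zero_le_power2[of "norm x"] a0 A0 B0]
          have Gb: "0 \<le> G ((norm x)\<^sup>2)" "G ((norm x)\<^sup>2) \<le> (A + B/a)/a^3" unfolding G_def by auto
          have "G ((norm x)\<^sup>2) * gd x \<le> ((A + B/a)/a^3) * gd x" by (rule mult_right_mono[OF Gb(2) g0])
          moreover have "0 \<le> G ((norm x)\<^sup>2) * gd x" using Gb g0 by simp
          ultimately show "norm (G ((norm x)\<^sup>2) * gd x) \<le> norm (((A + B/a)/a^3) * gd x)"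
            unfolding real_norm_def by linarith
        qed
      qed measurable
    qed
    have eqA: "gd x * LA x = gd x * LJ x - S x * gd x - c*a*(k ((norm x)\<^sup>2) * (\<theta> \<bullet> x) * gd x)
                 - c*a*(G ((norm x)\<^sup>2) * gd x)" if x: "x \<noteq> 0" for x
    proof -
      define W where "W = (norm x)\<^sup>2"
      have Wp: "0 < W" using x by (simp add: W_def)
      have id: "LJ x - LA x = S x + c*a*(k W * (\<theta> \<bullet> x)) + c*a*G W"
        using ident[where T="\<theta> \<bullet> x" and N=N and p=p, OF Wp a0]
        unfolding LJ_eq LA_eq S_def k_def G_def A_def B_def W_def[symmetric] c_def p_def by simp
      show ?thesis using id unfolding W_def by (simp add: algebra_simps)
    qed
    have iRHS: "integrable lborel (\<lambda>x. gd x * LJ x - S x * gd x - c*a*(k ((norm x)\<^sup>2) * (\<theta> \<bullet> x) * gd x)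
                 - c*a*(G ((norm x)\<^sup>2) * gd x))"
      using iJ iS ikT iG by (intro Bochner_Integration.integrable_diff Bochner_Integration.integrable_mult_right) auto
    have AEeq: "AE x in lborel. gd x * LA x = gd x * LJ x - S x * gd x - c*a*(k ((norm x)\<^sup>2) * (\<theta> \<bullet> x) * gd x)
                 - c*a*(G ((norm x)\<^sup>2) * gd x)"
      using AE_lborel_singleton[of 0] by eventually_elim (use eqA in auto)
    have iA: "integrable lborel (\<lambda>x. gd x * LA x)"
      using iRHS by (subst integrable_cong_AE[OF _ _ AEeq]) auto
    have intA: "(\<integral>x. gd x * LA x \<partial>lborel) = (\<integral>x. gd x * LJ x \<partial>lborel) - (\<integral>x. S x * gd x \<partial>lborel)
          - c*a*(\<integral>x. k ((norm x)\<^sup>2) * (\<theta> \<bullet> x) * gd x \<partial>lborel) - c*a*(\<integral>x. G ((norm x)\<^sup>2) * gd x \<partial>lborel)"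
    proof -
      have "(\<integral>x. gd x * LA x \<partial>lborel) = (\<integral>x. gd x * LJ x - S x * gd x - c*a*(k ((norm x)\<^sup>2) * (\<theta> \<bullet> x) * gd x)
                 - c*a*(G ((norm x)\<^sup>2) * gd x) \<partial>lborel)"
        by (rule integral_cong_AE[OF _ _ AEeq]) auto
      also have "\<dots> = (\<integral>x. gd x * LJ x \<partial>lborel) - (\<integral>x. S x * gd x \<partial>lborel)
          - c*a*(\<integral>x. k ((norm x)\<^sup>2) * (\<theta> \<bullet> x) * gd x \<partial>lborel) - c*a*(\<integral>x. G ((norm x)\<^sup>2) * gd x \<partial>lborel)"
        using iJ iS ikT iG by simp
      finally show ?thesis .
    qed
    have kT0: "0 \<le> (\<integral>x. k ((norm x)\<^sup>2) * (\<theta> \<bullet> x) * gd x \<partial>lborel)"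
      unfolding gd_def
      by (rule kT_nonneg) (use ikT a0 a4 in \<open>auto simp: gd_def k_def\<close>)
    have G0: "0 \<le> (\<integral>x. G ((norm x)\<^sup>2) * gd x \<partial>lborel)"
    proof (intro integral_nonneg_AE AE_I2 mult_nonneg_nonneg)
      fix x :: "real^'n"
      show "0 \<le> G ((norm x)\<^sup>2)" using G_bound[OF zero_le_power2[of "norm x"] a0 A0 B0] unfolding G_def by auto
      show "0 \<le> gd x" unfolding gd_def by (rule gd_nonneg)
    qed
    have ca: "0 \<le> c*a" using cpos a0 by simp
    have le: "(\<integral>x. gd x * LA x \<partial>lborel) \<le> (\<integral>x. gd x * LJ x \<partial>lborel)"
      unfolding intA S0 using mult_nonneg_nonneg[OF ca kT0] mult_nonneg_nonneg[OF ca G0] by linarith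
    have "(\<integral>\<^sup>+x. ennreal (gd x * LA x) \<partial>lborel) = ennreal (\<integral>x. gd x * LA x \<partial>lborel)"
      by (rule nn_integral_eq_integral[OF iA]) (auto simp: gd_def gd_nonneg LA_def)
    also have "\<dots> \<le> ennreal (\<integral>x. gd x * LJ x \<partial>lborel)" using le by (rule ennreal_leI)
    also have "\<dots> = (\<integral>\<^sup>+x. ennreal (gd x * LJ x) \<partial>lborel)"
      by (rule nn_integral_eq_integral[OF iJ, symmetric]) (auto simp: gd_def gd_nonneg LJ_def)
    finally show ?thesis unfolding rA rJ .
  qed
qed

lemma gamma_int:
  fixes x :: real assumes x: "0 < x"
  shows "integrable lborel (\<lambda>w. indicator {0<..} w * (w powr (x - 1) * exp (-w/2)))"
proof -
  define f where "f t = t powr (x - 1) / exp t" for t :: real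
  have [measurable]: "f \<in> borel_measurable borel" unfolding f_def[abs_def] by measurable
  have "f integrable_on {0..}" unfolding f_def using Gamma_integral_real[OF x] by blast
  then have "f absolutely_integrable_on {0..}"
    by (rule nonnegative_absolutely_integrable_1) (simp add: f_def)
  then have "integrable lebesgue (\<lambda>t. indicator {0..} t *\<^sub>R f t)"
    by (simp add: set_integrable_def)
  then have gi: "integrable lborel (\<lambda>t. indicator {0..} t * f t)"
    by (subst (asm) integrable_completion) auto
  have "integrable lborel (\<lambda>w. (\<lambda>t. indicator {0..} t * f t) (0 + (1/2) * w))"
    by (rule lborel_integrable_real_affine[OF gi]) simp
  then have "integrable lborel (\<lambda>w. 2 powr (x - 1) * (indicator {0..} (w/2) * f (w/2)))"
    by (intro Bochner_Integration.integrable_mult_right) simp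
  then show ?thesis
  proof (rule Bochner_Integration.integrable_bound)
    show "AE w in lborel. norm (indicator {0<..} w * (w powr (x - 1) * exp (-w/2))) \<le> norm (2 powr (x - 1) * (indicator {0..} (w/2) * f (w/2)))"
    proof (rule AE_I2)
      fix w :: real
      show "norm (indicator {0<..} w * (w powr (x - 1) * exp (-w/2))) \<le> norm (2 powr (x - 1) * (indicator {0..} (w/2) * f (w/2)))"
      proof (cases "0 < w")
        case True
        have "(w/2) powr (x - 1) = w powr (x - 1) / 2 powr (x - 1)" using True by (simp add: powr_divide)
        then have "2 powr (x - 1) * f (w/2) = w powr (x - 1) * exp (-w/2)"
          unfolding f_def by (simp add: exp_minus field_simps)
        then show ?thesis using True by (simp add: indicator_def)
      next
        case False
        then show ?thesis by (simp add: indicator_def)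
      qed
    qed
  qed measurable
qed

lemma lbint_phi:
  fixes a c w :: real assumes w: "0 < w"
  shows "(LBINT t=0..w. (t / (a*c)) / t) = w / (a*c)"
proof -
  have "(LBINT t=0..w. (t / (a*c)) / t) = (LBINT t=ereal 0..ereal w. 1 / (a*c))"
    unfolding zero_ereal_def
    by (rule interval_integral_cong) (use w in \<open>auto simp: einterval_iff min_def max_def\<close>)
  also have "\<dots> = w / (a*c)" by (subst interval_integral_const) simp
  finally show ?thesis .
qed

lemma I_weight_eq:
  fixes a c w :: real and n :: nat
  assumes w: "0 < w" and a: "0 < a" and c: "0 < c"
  shows "I_weight (\<lambda>w. w / (a*c)) (1/c) n w = (a*c)^2 * (w powr (real n/2 - 2) * exp (-w/2) / (w+a)^2)"
proof -
  have e1: "(LBINT t=0..w. (t / (a*c)) / t) + 1/c = (w + a)/(a*c)"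
    unfolding lbint_phi[OF w] using a c by (simp add: field_simps)
  have e2: "w powr (real n/2 - 1) = w powr (real n/2 - 2) * w"
  proof -
    have "w powr (real n/2 - 2) * w = w powr (real n/2 - 2) * w powr 1" using w by simp
    also have "\<dots> = w powr (real n/2 - 2 + 1)" by (simp only: powr_add)
    also have "real n/2 - 2 + 1 = real n/2 - 1" by simp
    finally show ?thesis by simp
  qed
  have nz: "w + a \<noteq> 0" "a*c \<noteq> 0" "w \<noteq> 0" using w a c by auto
  show ?thesis unfolding I_weight_def e1 e2 using nz
    by (simp add: field_simps power_divide)
qed

lemma set_int_bound:
  fixes f g :: "real \<Rightarrow> real"
  assumes g: "set_integrable lborel A g" and [measurable]: "f \<in> borel_measurable borel" "A \<in> sets borel"
  and b: "\<And>x. x \<in> A \<Longrightarrow> \<bar>f x\<bar> \<le> g x"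
  shows "set_integrable lborel A f"
  using g unfolding set_integrable_def
proof (rule Bochner_Integration.integrable_bound)
  show "AE x in lborel. norm (indicator A x *\<^sub>R f x) \<le> norm (indicator A x *\<^sub>R g x)"
  proof (rule AE_I2)
    fix x show "norm (indicator A x *\<^sub>R f x) \<le> norm (indicator A x *\<^sub>R g x)"
      using b[of x] by (cases "x \<in> A") (auto simp: indicator_def)
  qed
qed measurable

lemma gamma_set_int:
  fixes x :: real assumes x: "0 < x"
  shows "set_integrable lborel {0<..} (\<lambda>w. w powr (x - 1) * exp (-w/2))"
  using gamma_int[OF x] unfolding set_integrable_def by simp

lemma powr_succ: "0 < (w::real) \<Longrightarrow> w * w powr (k - 1) = w powr k"
proof -
  assume w: "0 < w"
  have "w * w powr (k - 1) = w powr 1 * w powr (k - 1)" using w by simp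
  also have "\<dots> = w powr (1 + (k - 1))" by (simp only: powr_add)
  finally show ?thesis by simp
qed

lemma part2_core:
  fixes a :: real and n :: nat
  assumes a: "0 < a" and n7: "7 \<le> n"
  defines "k \<equiv> real n / 2 - 1"
  defines "h \<equiv> \<lambda>w. w powr (k - 1) * exp (-w/2) / (w+a)^2"
  shows "set_integrable lborel {0<..} h \<and> set_integrable lborel {0<..} (\<lambda>w. w * h w) \<and>
         0 < (LINT w:{0<..}|lborel. h w) \<and>
         (real n - 6) * (LINT w:{0<..}|lborel. h w) \<le> (LINT w:{0<..}|lborel. w * h w)"
proof -
  have k: "5/2 \<le> k" using n7 unfolding k_def by simp
  have [measurable]: "h \<in> borel_measurable borel" unfolding h_def by measurable
  have hpos: "0 < h w" if "0 < w" for w using that a unfolding h_def by simp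
  have ih: "set_integrable lborel {0<..} h"
  proof (rule set_int_bound)
    show "set_integrable lborel {0<..} (\<lambda>w. (1/a^2) * (w powr (k - 1) * exp (-w/2)))"
      using gamma_set_int[of k] k by simp
    fix w :: real assume w: "w \<in> {0<..}"
    have "h w \<le> w powr (k - 1) * exp (-w/2) / a^2" unfolding h_def
      by (rule divide_left_mono) (use w a in \<open>auto intro!: power_mono\<close>)
    then show "\<bar>h w\<bar> \<le> (1/a^2) * (w powr (k - 1) * exp (-w/2))" using hpos[of w] w by simp
  qed measurable
  have iwh: "set_integrable lborel {0<..} (\<lambda>w. w * h w)"
  proof (rule set_int_bound)
    show "set_integrable lborel {0<..} (\<lambda>w. (1/a^2) * (w powr (k + 1 - 1) * exp (-w/2)))"
      using gamma_set_int[of "k+1"] k by simp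
    fix w :: real assume w: "w \<in> {0<..}"
    have "w * h w = w powr k * exp (-w/2) / (w+a)^2" unfolding h_def using w powr_succ[of w k] by simp
    also have "\<dots> \<le> w powr k * exp (-w/2) / a^2"
      by (rule divide_left_mono) (use w a in \<open>auto intro!: power_mono\<close>)
    finally show "\<bar>w * h w\<bar> \<le> (1/a^2) * (w powr (k + 1 - 1) * exp (-w/2))" using hpos[of w] w by simp
  qed measurable
  have ih2: "set_integrable lborel {0<..} (\<lambda>w. h w * (w/(w+a)))"
  proof (rule set_int_bound[OF ih])
    fix w :: real assume w: "w \<in> {0<..}"
    have "w/(w+a) \<le> 1" using w a by simp
    then have "h w * (w/(w+a)) \<le> h w" by (rule mult_left_le) (use hpos[of w] w in simp)
    moreover have "0 \<le> h w * (w/(w+a))" using hpos[of w] w a by simp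
    ultimately show "\<bar>h w * (w/(w+a))\<bar> \<le> h w" by (simp only: abs_of_nonneg)
  qed measurable
  define F where "F w = w powr k * exp (-w/2) * (1/(w+a)^2)" for w
  define F' where "F' w = k * h w - (1/2) * (w * h w) - 2 * (h w * (w/(w+a)))" for w
  have iF': "set_integrable lborel {0<..} F'"
    unfolding F'_def by (intro set_integral_diff(1) set_integrable_mult_right ih iwh ih2)
  have dF: "(F has_real_derivative F' x) (at x)" if x: "0 < x" for x
  proof -
    have d1: "((\<lambda>w. w powr k) has_real_derivative k * x powr (k - 1)) (at x)"
      using DERIV_fun_powr[OF DERIV_ident, of x k] x by simp
    have d2: "((\<lambda>w. exp (-w/2)) has_real_derivative exp (-x/2) * (-1/2)) (at x)"
      by (auto intro!: derivative_eq_intros)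
    have d3: "((\<lambda>w. 1/(w+a)^2) has_real_derivative (- 2*1/(x+a)^3)) (at x)"
      by (rule d2_aux) (use x a in simp)
    have D: "(F has_real_derivative ((k * x powr (k - 1)) * exp (-x/2) + exp (-x/2) * (-1/2) * x powr k) * (1/(x+a)^2)
              + (- 2*1/(x+a)^3) * (x powr k * exp (-x/2))) (at x)"
      unfolding F_def[abs_def] by (intro DERIV_mult d1 d2 d3)
    have "((k * x powr (k - 1)) * exp (-x/2) + exp (-x/2) * (-1/2) * x powr k) * (1/(x+a)^2)
              + (- 2*1/(x+a)^3) * (x powr k * exp (-x/2)) = F' x"
    proof -
      have xa: "x + a \<noteq> 0" using x a by simp
      show ?thesis unfolding F'_def h_def powr_succ[OF x, of k, symmetric] using xa
        apply (simp add: divide_simps) by algebra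
    qed
    with D show ?thesis by simp
  qed
  have cF': "isCont F' x" if x: "0 < x" for x
    unfolding F'_def h_def using x a by (auto intro!: continuous_intros)
  have lim0: "(F \<longlongrightarrow> 0) (at_right 0)"
  proof -
    have "((\<lambda>w. w powr k) \<longlongrightarrow> 0) (at_right 0)"
      by (rule tendsto_zero_powrI) (use k in \<open>auto intro: tendsto_ident_at eventually_at_rightI[of 0 1]\<close>)
    then have "(F \<longlongrightarrow> 0 * exp (-0/2) * (1/(0+a)^2)) (at_right 0)"
      unfolding F_def using a by (intro tendsto_intros) auto
    then show ?thesis by simp
  qed
  have limI: "(F \<longlongrightarrow> 0) at_top"
  proof (rule tendsto_sandwich[where f="\<lambda>_. 0" and h="\<lambda>w. (2^n/a^2) * ((w/2)^n / exp (w/2))"])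
    show "eventually (\<lambda>w. 0 \<le> F w) at_top"
      by (rule eventually_at_top_linorderI[of 1]) (simp add: F_def)
    show "eventually (\<lambda>w. F w \<le> (2^n/a^2) * ((w/2)^n / exp (w/2))) at_top"
    proof (rule eventually_at_top_linorderI[of 1])
      fix w :: real assume w: "1 \<le> w"
      have "w powr k \<le> w powr (real n)" using w k by (intro powr_mono) (auto simp: k_def)
      also have "\<dots> = w^n" using w by (simp add: powr_realpow)
      finally have p1: "w powr k \<le> w^n" .
      have p2: "1/(w+a)^2 \<le> 1/a^2" using w a by (intro divide_left_mono power_mono) auto
      have "F w \<le> w^n * exp (-w/2) * (1/a^2)"
        unfolding F_def by (intro mult_mono p1 p2) (use w a in auto)
      also have "\<dots> = (2^n/a^2) * ((w/2)^n / exp (w/2))"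
        by (simp add: power_divide exp_minus field_simps)
      finally show "F w \<le> (2^n/a^2) * ((w/2)^n / exp (w/2))" .
    qed
    have "filterlim (\<lambda>w::real. w/2) at_top at_top"
      by (rule filterlim_tendsto_pos_mult_at_top[OF tendsto_const _ filterlim_ident, of "1/2", simplified])
    then have "((\<lambda>w::real. (w/2)^n / exp (w/2)) \<longlongrightarrow> 0) at_top"
      by (rule filterlim_compose[OF tendsto_power_div_exp_0])
    then show "((\<lambda>w. (2^n/a^2) * ((w/2)^n / exp (w/2))) \<longlongrightarrow> 0) at_top"
      using tendsto_mult_right_zero by blast
  qed simp
  have FTC: "(LBINT x=0..\<infinity>. F' x) = 0 - 0"
  proof (rule interval_integral_FTC_integrable[where F=F])
    show "(0::ereal) < \<infinity>" by simp
    fix x assume "0 < ereal x" "ereal x < \<infinity>"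
    then have x: "0 < x" by (simp add: zero_ereal_def)
    show "(F has_vector_derivative F' x) (at x)"
      using dF[OF x] by (simp add: has_real_derivative_iff_has_vector_derivative)
    show "isCont F' x" using cF'[OF x] .
  next
    show "set_integrable lborel (einterval 0 \<infinity>) F'" using iF' by (simp add: zero_ereal_def)
    show "((F \<circ> real_of_ereal) \<longlongrightarrow> 0) (at_right 0)"
      unfolding zero_ereal_def ereal_tendsto_simps using lim0 by simp
    show "((F \<circ> real_of_ereal) \<longlongrightarrow> 0) (at_left \<infinity>)"
      unfolding ereal_tendsto_simps using limI .
  qed
  define J0 where "J0 = (LINT w:{0<..}|lborel. h w)"
  define J1 where "J1 = (LINT w:{0<..}|lborel. w * h w)"
  define J2 where "J2 = (LINT w:{0<..}|lborel. h w * (w/(w+a)))"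
  have "(LINT w:{0<..}|lborel. F' w) = 0"
    using FTC by (simp add: interval_lebesgue_integral_0_infty)
  moreover have "(LINT w:{0<..}|lborel. F' w) = k * J0 - (1/2) * J1 - 2 * J2"
  proof -
    have s1: "(LINT w:{0<..}|lborel. F' w) = (LINT w:{0<..}|lborel. k * h w - (1/2) * (w * h w)) - (LINT w:{0<..}|lborel. 2 * (h w * (w/(w+a))))"
      unfolding F'_def by (rule set_integral_diff(2)) (intro set_integral_diff(1) set_integrable_mult_right ih iwh ih2)+
    have s2: "(LINT w:{0<..}|lborel. k * h w - (1/2) * (w * h w)) = (LINT w:{0<..}|lborel. k * h w) - (LINT w:{0<..}|lborel. (1/2) * (w * h w))"
      by (rule set_integral_diff(2)) (intro set_integrable_mult_right ih iwh)+
    show ?thesis unfolding s1 s2 J0_def J1_def J2_def set_integral_mult_right ..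
  qed
  ultimately have eq: "k * J0 - (1/2) * J1 - 2 * J2 = 0" by simp
  have J20: "J2 \<le> J0" unfolding J2_def J0_def
  proof (rule set_integral_mono[OF ih2 ih])
    fix w :: real assume w: "w \<in> {0<..}"
    have "w/(w+a) \<le> 1" using w a by simp
    then show "h w * (w/(w+a)) \<le> h w" by (rule mult_left_le) (use hpos[of w] w in simp)
  qed
  have J1: "(real n - 6) * J0 \<le> J1"
  proof -
    have "real n - 6 = 2*k - 4" unfolding k_def by simp
    then show ?thesis using eq J20 by (simp add: algebra_simps)
  qed
  have J0pos: "0 < J0"
  proof -
    have nn: "AE w in lborel. 0 \<le> indicator {0<..} w *\<^sub>R h w"
      by (rule AE_I2) (auto simp: indicator_def less_imp_le[OF hpos])
    have J0nn: "0 \<le> J0" unfolding J0_def set_lebesgue_integral_def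
      by (rule integral_nonneg_AE[OF nn])
    have "J0 \<noteq> 0"
    proof
      assume "J0 = 0"
      then have "AE w in lborel. indicator {0<..} w *\<^sub>R h w = 0"
        using integral_nonneg_eq_0_iff_AE[OF ih[unfolded set_integrable_def] nn]
        unfolding J0_def set_lebesgue_integral_def by simp
      then have "AE w in lborel. w \<notin> {0<..<1::real}"
        by eventually_elim (auto simp: indicator_def dest: hpos split: if_splits)
      then have "emeasure lborel {0<..<1::real} = 0"
        by (subst (asm) AE_iff_measurable[of "{0<..<1::real}"]) auto
      then show False by simp
    qed
    with J0nn show ?thesis by simp
  qed
  show ?thesis using ih iwh J0pos J1 unfolding J0_def J1_def by simp
qed

theorem part2:
  fixes a :: real and n :: nat
  assumes a0: "0 < a" and n7: "7 \<le> n"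
  shows "(real n - 6) / (a * (real n - 2)) \<le> I_fun (\<lambda>w. w / (a * (real n - 2))) (1 / (real n - 2)) n"
proof -
  define c where "c = real n - 2"
  have cpos: "0 < c" using n7 by (simp add: c_def)
  have acpos: "0 < a * c" using a0 cpos by simp
  define h where "h = (\<lambda>w::real. w powr (real n / 2 - 1 - 1) * exp (-w/2) / (w+a)^2)"
  from part2_core[OF a0 n7] have ih: "set_integrable lborel {0<..} h"
    and iwh: "set_integrable lborel {0<..} (\<lambda>w. w * h w)"
    and J0pos: "0 < (LINT w:{0<..}|lborel. h w)"
    and J1: "(real n - 6) * (LINT w:{0<..}|lborel. h w) \<le> (LINT w:{0<..}|lborel. w * h w)"
    unfolding h_def by auto
  have hI: "I_weight (\<lambda>w. w / (a*c)) (1/c) n w = (a*c)^2 * h w" if w: "0 < w" for w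
    unfolding I_weight_eq[OF w a0 cpos] h_def by (simp add: power_mult_distrib)
  have num: "(\<integral>w\<in>{0<..}. (w / (a*c)) * I_weight (\<lambda>w. w / (a*c)) (1/c) n w \<partial>lborel)
        = (a*c) * (LINT w:{0<..}|lborel. w * h w)"
  proof -
    have "(\<integral>w\<in>{0<..}. (w / (a*c)) * I_weight (\<lambda>w. w / (a*c)) (1/c) n w \<partial>lborel)
        = (LINT w:{0<..}|lborel. (a*c) * (w * h w))"
      by (rule set_lebesgue_integral_cong) (use acpos in \<open>auto simp: hI power2_eq_square\<close>)
    then show ?thesis by simp
  qed
  have den: "(\<integral>w\<in>{0<..}. I_weight (\<lambda>w. w / (a*c)) (1/c) n w \<partial>lborel)
        = (a*c)^2 * (LINT w:{0<..}|lborel. h w)"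
  proof -
    have "(\<integral>w\<in>{0<..}. I_weight (\<lambda>w. w / (a*c)) (1/c) n w \<partial>lborel)
        = (LINT w:{0<..}|lborel. (a*c)^2 * h w)"
      by (rule set_lebesgue_integral_cong) (auto simp: hI)
    then show ?thesis by simp
  qed
  have "I_fun (\<lambda>w. w / (a*c)) (1/c) n = ((a*c) * (LINT w:{0<..}|lborel. w * h w)) / ((a*c)^2 * (LINT w:{0<..}|lborel. h w))"
    unfolding I_fun_def num den ..
  also have "\<dots> = (LINT w:{0<..}|lborel. w * h w) / ((a*c) * (LINT w:{0<..}|lborel. h w))"
    using acpos by (simp add: power2_eq_square)
  finally have If: "I_fun (\<lambda>w. w / (a*c)) (1/c) n = (LINT w:{0<..}|lborel. w * h w) / ((a*c) * (LINT w:{0<..}|lborel. h w))" .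
  have "(real n - 6) / (a*c) \<le> (LINT w:{0<..}|lborel. w * h w) / ((a*c) * (LINT w:{0<..}|lborel. h w))"
  proof -
    have "(real n - 6) / (a*c) = ((real n - 6) * (LINT w:{0<..}|lborel. h w)) / ((a*c) * (LINT w:{0<..}|lborel. h w))"
      using J0pos acpos by simp
    also have "\<dots> \<le> (LINT w:{0<..}|lborel. w * h w) / ((a*c) * (LINT w:{0<..}|lborel. h w))"
      by (rule divide_right_mono[OF J1]) (use J0pos acpos in simp)
    finally show ?thesis .
  qed
  then show ?thesis using If unfolding c_def by simp
qed

theorem mainTheorem8:
  fixes a :: real
  assumes "0 < a" and "a < 4"
  shows "(real CARD('n) \<ge> 2 * (12 - a) / (4 - a) \<longrightarrow>
            (\<forall>\<theta> :: real^'n.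
               risk \<theta> (shrink_est a (real CARD('n) - 2)) \<le> risk \<theta> JS_est))
       \<and> (CARD('n) \<ge> 7 \<longrightarrow>
            I_fun (\<lambda>w. w / (a * (real CARD('n) - 2))) (1 / (real CARD('n) - 2)) CARD('n)
              \<ge> (real CARD('n) - 6) / (a * (real CARD('n) - 2)))"
  using part1[OF assms] part2[OF assms(1)] by blast

end
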